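(* Let $p \geq 5$ be a prime and let $G$ be a group of order $p^7$ of nilpotency class $5$ such that $\gamma_2(G)$ is elementary abelian of order $p^5$. Then: (i) $|\gamma_5(G)| = p$; (ii) $|\operatorname{Z}(G/\gamma_5(G))| = p^2$ and $|\operatorname{Z}_2(G)| = p^3$; (iii) $\operatorname{K}(G) \neq \gamma_2(G)$; (iv) the commutator length of $G$ is $2$.
   Context: For a group $G$, $[x,y] = x^{-1}y^{-1}xy$, $\operatorname{K}(G) = \{[a,b] \mid a,b \in G\}$, $\gamma_i(G)$ is the $i$-th term of the lower central series, $\operatorname{Z}(G)$ the center and $\operatorname{Z}_2(G)$ the second term of the upper central series. The commutator length of $G$ is the smallest positive integer $m$ such that every element of $\gamma_2(G)$ is a product of at most $m$ commutators in $G$. *)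

theory Defs
  imports "HOL-Algebra.Algebra"
begin

definition comm :: "('a, 'b) monoid_scheme \<Rightarrow> 'a \<Rightarrow> 'a \<Rightarrow> 'a" where
  "comm G x y = inv\<^bsub>G\<^esub> x \<otimes>\<^bsub>G\<^esub> inv\<^bsub>G\<^esub> y \<otimes>\<^bsub>G\<^esub> x \<otimes>\<^bsub>G\<^esub> y"

definition commutators :: "('a, 'b) monoid_scheme \<Rightarrow> 'a set" where
  "commutators G = {comm G a b | a b. a \<in> carrier G \<and> b \<in> carrier G}"

definition comm_subgroup :: "('a, 'b) monoid_scheme \<Rightarrow> 'a set \<Rightarrow> 'a set \<Rightarrow> 'a set" where
  "comm_subgroup G A B = generate G {comm G a b | a b. a \<in> A \<and> b \<in> B}"

text \<open>lcs G n = gamma_(n+1)(G).\<close>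
primrec lcs :: "('a, 'b) monoid_scheme \<Rightarrow> nat \<Rightarrow> 'a set" where
  "lcs G 0 = carrier G"
| "lcs G (Suc n) = comm_subgroup G (lcs G n) (carrier G)"

definition gamma :: "('a, 'b) monoid_scheme \<Rightarrow> nat \<Rightarrow> 'a set" where
  "gamma G i = lcs G (i - 1)"

definition center :: "('a, 'b) monoid_scheme \<Rightarrow> 'a set" where
  "center G = {z \<in> carrier G. \<forall>g \<in> carrier G. z \<otimes>\<^bsub>G\<^esub> g = g \<otimes>\<^bsub>G\<^esub> z}"

text \<open>Second centre: Z_2(G)/Z(G) = Z(G/Z(G)), i.e. [z,g] in Z(G) for all g.\<close>
definition center2 :: "('a, 'b) monoid_scheme \<Rightarrow> 'a set" where
  "center2 G = {z \<in> carrier G. \<forall>g \<in> carrier G. comm G z g \<in> center G}"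

definition nilpotency_class :: "('a, 'b) monoid_scheme \<Rightarrow> nat \<Rightarrow> bool" where
  "nilpotency_class G c \<longleftrightarrow> gamma G (c + 1) = {\<one>\<^bsub>G\<^esub>} \<and> gamma G c \<noteq> {\<one>\<^bsub>G\<^esub>}"

definition elementary_abelian :: "('a, 'b) monoid_scheme \<Rightarrow> 'a set \<Rightarrow> nat \<Rightarrow> bool" where
  "elementary_abelian G H p \<longleftrightarrow> subgroup H G \<and>
     (\<forall>x \<in> H. \<forall>y \<in> H. x \<otimes>\<^bsub>G\<^esub> y = y \<otimes>\<^bsub>G\<^esub> x) \<and>
     (\<forall>x \<in> H. x [^]\<^bsub>G\<^esub> p = \<one>\<^bsub>G\<^esub>)"

definition comm_products :: "('a, 'b) monoid_scheme \<Rightarrow> nat \<Rightarrow> 'a set" where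
  "comm_products G m = {foldr (\<otimes>\<^bsub>G\<^esub>) xs \<one>\<^bsub>G\<^esub> | xs. length xs \<le> m \<and> set xs \<subseteq> commutators G}"

definition commutator_length :: "('a, 'b) monoid_scheme \<Rightarrow> nat" where
  "commutator_length G = (LEAST m. 0 < m \<and> gamma G 2 \<subseteq> comm_products G m)"

end

theory Submission
  imports Defs
begin


context group begin

lemma canc1[simp]: "x \<in> carrier G \<Longrightarrow> y \<in> carrier G \<Longrightarrow> x \<otimes> (inv x \<otimes> y) = y"
  by (simp add: m_assoc[symmetric])
lemma canc2[simp]: "x \<in> carrier G \<Longrightarrow> y \<in> carrier G \<Longrightarrow> inv x \<otimes> (x \<otimes> y) = y"
  by (simp add: m_assoc[symmetric])

lemma comm_closed[simp]: "x \<in> carrier G \<Longrightarrow> y \<in> carrier G \<Longrightarrow> comm G x y \<in> carrier G"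
  by (simp add: comm_def)

lemma comm_inv: "x \<in> carrier G \<Longrightarrow> y \<in> carrier G \<Longrightarrow> inv (comm G x y) = comm G y x"
  by (simp add: comm_def inv_mult_group m_assoc)

lemma comm_mult_left:
  assumes "x \<in> carrier G" "y \<in> carrier G" "z \<in> carrier G"
  shows "comm G (x \<otimes> y) z = inv y \<otimes> comm G x z \<otimes> y \<otimes> comm G y z"
  using assms by (simp add: comm_def inv_mult_group m_assoc)

lemma comm_mult_right:
  assumes "x \<in> carrier G" "y \<in> carrier G" "z \<in> carrier G"
  shows "comm G x (y \<otimes> z) = comm G x z \<otimes> inv z \<otimes> comm G x y \<otimes> z"
  using assms by (simp add: comm_def inv_mult_group m_assoc)

lemma comm_one_iff:
  assumes "x \<in> carrier G" "y \<in> carrier G"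
  shows "comm G x y = \<one> \<longleftrightarrow> x \<otimes> y = y \<otimes> x"
proof -
  have "comm G x y = inv (y \<otimes> x) \<otimes> (x \<otimes> y)"
    using assms by (simp add: comm_def inv_mult_group m_assoc)
  moreover have "inv u \<otimes> v = \<one> \<longleftrightarrow> v = u" if "u \<in> carrier G" "v \<in> carrier G" for u v
  proof
    assume "inv u \<otimes> v = \<one>"
    then have "u \<otimes> (inv u \<otimes> v) = u" using that by simp
    then show "v = u" using that by simp
  qed (use that in simp)
  ultimately show ?thesis using assms by auto
qed

lemma comm_swap_eq:
  assumes "x \<in> carrier G" "y \<in> carrier G"
  shows "x \<otimes> y = y \<otimes> x \<otimes> comm G x y"
  using assms by (simp add: comm_def m_assoc)

lemma sg_pow: "subgroup H G \<Longrightarrow> h \<in> H \<Longrightarrow> h [^] (n::nat) \<in> H"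
  by (induct n) (auto intro: subgroup.m_closed subgroup.one_closed)

lemma sg_coprime_pow:
  assumes H: "subgroup H G" and x: "x \<in> carrier G" and xm: "x [^] m \<in> H" and xn: "x [^] n \<in> H"
    and cop: "coprime m n" and m0: "m \<noteq> (0::nat)"
  shows "x \<in> H"
proof -
  obtain u v where uv: "m * u = n * v + gcd m n" using bezout_nat[OF m0] by blast
  hence uv': "m*u = Suc (n*v)" using cop by simp
  have 1: "x [^] (m*u) \<in> H" using sg_pow[OF H xm, of u] by (simp add: nat_pow_pow[OF x])
  have 2: "x [^] (n*v) \<in> H" using sg_pow[OF H xn, of v] by (simp add: nat_pow_pow[OF x])
  have e: "x [^] (m*u) = x [^] (n*v) \<otimes> x" using uv' by simp
  have "inv (x [^] (n*v)) \<otimes> x [^] (m*u) = x" unfolding e using x by simp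
  moreover have "inv (x [^] (n*v)) \<in> H" using subgroup.m_inv_closed[OF H 2] .
  ultimately show ?thesis using subgroup.m_closed[OF H _ 1] by metis
qed

lemma normal_comm_mem: "N \<lhd> G \<Longrightarrow> x \<in> N \<Longrightarrow> g \<in> carrier G \<Longrightarrow> comm G x g \<in> N"
proof -
  assume N: "N \<lhd> G" and x: "x \<in> N" and g: "g \<in> carrier G"
  have sg: "subgroup N G" using N by (rule normal_imp_subgroup)
  have xc: "x \<in> carrier G" using subgroup.mem_carrier[OF sg x] .
  have e: "comm G x g = inv x \<otimes> (inv g \<otimes> x \<otimes> g)" using xc g by (simp add: comm_def m_assoc)
  have "inv g \<otimes> x \<otimes> g \<in> N" using normal.inv_op_closed1[OF N g x] .
  moreover have "inv x \<in> N" using subgroup.m_inv_closed[OF sg x] .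
  ultimately show ?thesis unfolding e using subgroup.m_closed[OF sg] by blast
qed

lemma commsetI: "a \<in> N \<Longrightarrow> b \<in> M \<Longrightarrow> z = comm G a b \<Longrightarrow> z \<in> {comm G a b |a b. a \<in> N \<and> b \<in> M}"
  by blast

lemma comm_subgroup_normal:
  assumes N: "N \<lhd> G" shows "comm_subgroup G N (carrier G) \<lhd> G"
  unfolding comm_subgroup_def
proof (rule normal_generateI)
  have sg: "subgroup N G" using N by (rule normal_imp_subgroup)
  show "{comm G a b |a b. a \<in> N \<and> b \<in> carrier G} \<subseteq> carrier G"
    using sg by (auto simp: comm_def dest: subgroup.mem_carrier)
  fix h g assume h: "h \<in> {comm G a b |a b. a \<in> N \<and> b \<in> carrier G}" and g: "g \<in> carrier G"
  then obtain x y where hxy: "h = comm G x y" "x \<in> N" "y \<in> carrier G" by blast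
  have xc: "x \<in> carrier G" using subgroup.mem_carrier[OF sg hxy(2)] .
  have e: "g \<otimes> h \<otimes> inv g = comm G (g \<otimes> x \<otimes> inv g) (g \<otimes> y \<otimes> inv g)"
    unfolding hxy(1) using hxy(3) xc g by (simp add: comm_def m_assoc inv_mult_group)
  have "g \<otimes> x \<otimes> inv g \<in> N" using normal.inv_op_closed2[OF N g hxy(2)] .
  moreover have "g \<otimes> y \<otimes> inv g \<in> carrier G" using g hxy by simp
  ultimately show "g \<otimes> h \<otimes> inv g \<in> {comm G a b |a b. a \<in> N \<and> b \<in> carrier G}"
    using e by (rule commsetI)
qed

lemma lcs_normal: "lcs G n \<lhd> G"
  by (induct n) (simp_all add: normal_self comm_subgroup_normal)

lemma lcs_sg: "subgroup (lcs G n) G"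
  using lcs_normal by (rule normal_imp_subgroup)

lemma lcs_sub: "lcs G n \<subseteq> carrier G"
  using lcs_sg by (rule subgroup.subset)

lemma lcs_carrier: "x \<in> lcs G n \<Longrightarrow> x \<in> carrier G"
  using lcs_sub by (rule subsetD)

lemma lcs_mem: "x \<in> lcs G n \<Longrightarrow> g \<in> carrier G \<Longrightarrow> comm G x g \<in> lcs G (Suc n)"
  by (auto simp: comm_subgroup_def intro: generate.incl)

lemma lcs_min:
  assumes "subgroup H G" "\<And>x g. x \<in> lcs G n \<Longrightarrow> g \<in> carrier G \<Longrightarrow> comm G x g \<in> H"
  shows "lcs G (Suc n) \<subseteq> H"
  unfolding lcs.simps comm_subgroup_def
  by (rule generate_subgroup_incl) (use assms in auto)

lemma lcs_Suc_sub: "lcs G (Suc n) \<subseteq> lcs G n"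
  by (rule lcs_min[OF lcs_sg]) (rule normal_comm_mem[OF lcs_normal])

lemma lcs_mono: "m \<le> n \<Longrightarrow> lcs G n \<subseteq> lcs G m"
proof (induct n rule: dec_induct)
  case (step n) thus ?case using lcs_Suc_sub[of n] by (meson order_trans)
qed simp

lemma lcs_stable: "lcs G (Suc n) = lcs G n \<Longrightarrow> lcs G (n + k) = lcs G n"
proof (induct k)
  case (Suc k)
  have "lcs G (n + Suc k) = comm_subgroup G (lcs G (n + k)) (carrier G)" by simp
  also have "\<dots> = comm_subgroup G (lcs G n) (carrier G)" using Suc by simp
  also have "\<dots> = lcs G (Suc n)" by simp
  finally show ?case using Suc by simp
qed simp

end


definition pcl :: "('a,'b) monoid_scheme \<Rightarrow> 'a \<Rightarrow> 'a set \<Rightarrow> 'a set" where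
  "pcl G t N = {t [^]\<^bsub>G\<^esub> (k::nat) \<otimes>\<^bsub>G\<^esub> n | k n. n \<in> N}"

definition sprod :: "('a,'b) monoid_scheme \<Rightarrow> 'a set \<Rightarrow> 'a set \<Rightarrow> 'a set" where
  "sprod G H K = {h \<otimes>\<^bsub>G\<^esub> k | h k. h \<in> H \<and> k \<in> K}"

definition Cm :: "('a,'b) monoid_scheme \<Rightarrow> 'a set \<Rightarrow> 'a \<Rightarrow> 'a set" where
  "Cm G N g = (\<lambda>x. comm G x g) ` N"

context group begin

lemma pclI: "n \<in> N \<Longrightarrow> t [^] (k::nat) \<otimes> n \<in> pcl G t N"
  unfolding pcl_def by blast

lemma pclE: "x \<in> pcl G t N \<Longrightarrow> (\<And>k n. n \<in> N \<Longrightarrow> x = t [^] (k::nat) \<otimes> n \<Longrightarrow> P) \<Longrightarrow> P"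
  unfolding pcl_def by blast

lemma sprodI: "h \<in> H \<Longrightarrow> k \<in> K \<Longrightarrow> h \<otimes> k \<in> sprod G H K"
  unfolding sprod_def by blast

lemma sprodE: "x \<in> sprod G H K \<Longrightarrow> (\<And>h k. h \<in> H \<Longrightarrow> k \<in> K \<Longrightarrow> x = h \<otimes> k \<Longrightarrow> P) \<Longrightarrow> P"
  unfolding sprod_def by blast

lemma CmI: "x \<in> N \<Longrightarrow> comm G x g \<in> Cm G N g"
  unfolding Cm_def by blast

lemma CmE: "y \<in> Cm G N g \<Longrightarrow> (\<And>x. x \<in> N \<Longrightarrow> y = comm G x g \<Longrightarrow> P) \<Longrightarrow> P"
  unfolding Cm_def by blast

lemma pcl_incl: "N \<subseteq> carrier G \<Longrightarrow> n \<in> N \<Longrightarrow> n \<in> pcl G t N"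
  using pclI[of n N t 0] by (simp add: subsetD)

lemma pcl_gen: "t \<in> carrier G \<Longrightarrow> \<one> \<in> N \<Longrightarrow> t [^] (k::nat) \<in> pcl G t N"
  using pclI[of "\<one>" N t k] by simp

lemma pcl_gen1: "t \<in> carrier G \<Longrightarrow> \<one> \<in> N \<Longrightarrow> t \<in> pcl G t N"
  using pcl_gen[of t N 1] by simp

lemma pcl_in_sg:
  assumes H: "subgroup H G" and t: "t \<in> H" and N: "N \<subseteq> H"
  shows "pcl G t N \<subseteq> H"
proof
  fix x assume "x \<in> pcl G t N"
  then obtain k n where n: "n \<in> N" and x: "x = t [^] (k::nat) \<otimes> n" by (rule pclE)
  have "t [^] k \<in> H" using sg_pow[OF H t] .
  moreover have "n \<in> H" using N n by (rule subsetD)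
  ultimately show "x \<in> H" unfolding x by (rule subgroup.m_closed[OF H])
qed

lemma cj_pow: "x \<in> carrier G \<Longrightarrow> t \<in> carrier G \<Longrightarrow>
    x \<otimes> t [^] (k::nat) \<otimes> inv x = (x \<otimes> t \<otimes> inv x) [^] k"
proof (induct k)
  case 0 thus ?case by simp
next
  case (Suc k)
  have "x \<otimes> t [^] Suc k \<otimes> inv x = (x \<otimes> t [^] k \<otimes> inv x) \<otimes> (x \<otimes> t \<otimes> inv x)"
    using Suc.prems by (simp add: m_assoc)
  also have "\<dots> = (x \<otimes> t \<otimes> inv x) [^] Suc k" using Suc by simp
  finally show ?case .
qed

lemma inv_pow_eq:
  assumes fin: "finite (carrier G)" and t: "t \<in> carrier G"
  shows "inv (t [^] (i::nat)) = t [^] (i * (order G - 1))"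
proof (rule inv_equality)
  have o: "order G \<ge> 1" using fin order_gt_0_iff_finite by (simp add: Suc_le_eq)
  have "i * (order G - 1) + i = order G * i" using o by (simp add: algebra_simps)
  hence "t [^] (i * (order G - 1)) \<otimes> t [^] i = (t [^] order G) [^] i"
    using t by (simp add: nat_pow_mult nat_pow_pow)
  also have "\<dots> = \<one>" using pow_order_eq_1[OF t] by simp
  finally show "t [^] (i * (order G - 1)) \<otimes> t [^] i = \<one>" .
qed (use t in simp_all)

lemma pcl_sg:
  assumes fin: "finite (carrier G)" and N: "N \<lhd> G" and t: "t \<in> carrier G"
  shows "subgroup (pcl G t N) G"
proof -
  have sg: "subgroup N G" using N by (rule normal_imp_subgroup)
  have Nc: "\<And>n. n \<in> N \<Longrightarrow> n \<in> carrier G" using subgroup.mem_carrier[OF sg] .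
  show ?thesis
  proof
    show "pcl G t N \<subseteq> carrier G"
    proof
      fix x assume "x \<in> pcl G t N"
      then obtain k n where "n \<in> N" "x = t [^] (k::nat) \<otimes> n" by (rule pclE)
      thus "x \<in> carrier G" using t Nc by simp
    qed
  next
    show "\<one> \<in> pcl G t N" using pcl_incl[OF subgroup.subset[OF sg] subgroup.one_closed[OF sg]] .
  next
    fix x y assume x: "x \<in> pcl G t N" and y: "y \<in> pcl G t N"
    obtain i n where n: "n \<in> N" and xe: "x = t [^] (i::nat) \<otimes> n" using x by (rule pclE)
    obtain j m where m: "m \<in> N" and ye: "y = t [^] (j::nat) \<otimes> m" using y by (rule pclE)
    have nc: "n \<in> carrier G" "m \<in> carrier G" using Nc n m by auto
    have e: "x \<otimes> y = t [^] (i + j) \<otimes> ((inv (t [^] j) \<otimes> n \<otimes> t [^] j) \<otimes> m)"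
      unfolding xe ye using nc t by (simp add: m_assoc nat_pow_mult[symmetric])
    have "inv (t [^] j) \<otimes> n \<otimes> t [^] j \<in> N" using normal.inv_op_closed1[OF N _ n] t by simp
    hence "(inv (t [^] j) \<otimes> n \<otimes> t [^] j) \<otimes> m \<in> N" using subgroup.m_closed[OF sg _ m] by simp
    thus "x \<otimes> y \<in> pcl G t N" unfolding e by (rule pclI)
  next
    fix x assume x: "x \<in> pcl G t N"
    obtain i n where n: "n \<in> N" and xe: "x = t [^] (i::nat) \<otimes> n" using x by (rule pclE)
    have nc: "n \<in> carrier G" using Nc n by auto
    have e: "inv x = inv (t [^] i) \<otimes> (t [^] i \<otimes> inv n \<otimes> inv (t [^] i))"
      unfolding xe using nc t by (simp add: m_assoc inv_mult_group)
    have "t [^] i \<otimes> inv n \<otimes> inv (t [^] i) \<in> N"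
      using normal.inv_op_closed2[OF N _ subgroup.m_inv_closed[OF sg n]] t by simp
    thus "inv x \<in> pcl G t N" unfolding e inv_pow_eq[OF fin t] by (rule pclI)
  qed
qed

lemma pow_mod_eq:
  assumes t: "t \<in> carrier G" and tp: "t [^] (p::nat) = \<one>"
  shows "t [^] (k::nat) = t [^] (k mod p)"
proof -
  have "t [^] k = t [^] (p * (k div p) + k mod p)" by simp
  also have "\<dots> = (t [^] p) [^] (k div p) \<otimes> t [^] (k mod p)"
    using t by (simp add: nat_pow_mult nat_pow_pow)
  finally show ?thesis using tp t by simp
qed

lemma pcl_card:
  assumes t: "t \<in> carrier G" and tp: "t [^] (p::nat) = \<one>" and fin: "finite N" and p0: "p > 0"
  shows "card (pcl G t N) \<le> p * card N"
proof -
  have "pcl G t N \<subseteq> (\<lambda>(k,n). t [^] (k::nat) \<otimes> n) ` ({..<p} \<times> N)"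
  proof
    fix x assume "x \<in> pcl G t N"
    then obtain k n where n: "n \<in> N" and xe: "x = t [^] (k::nat) \<otimes> n" by (rule pclE)
    show "x \<in> (\<lambda>(k,n). t [^] (k::nat) \<otimes> n) ` ({..<p} \<times> N)"
    proof (cases "p = 0")
      case True
      then show ?thesis using p0 by simp
    next
      case False
      have "x = (\<lambda>(k,n). t [^] (k::nat) \<otimes> n) (k mod p, n)"
        unfolding xe using pow_mod_eq[OF t tp, of k] by simp
      moreover have "(k mod p, n) \<in> {..<p} \<times> N" using n False by simp
      ultimately show ?thesis by (rule image_eqI)
    qed
  qed
  hence "card (pcl G t N) \<le> card ((\<lambda>(k,n). t [^] (k::nat) \<otimes> n) ` ({..<p} \<times> N))"
    using fin by (intro card_mono) auto
  also have "\<dots> \<le> card ({..<p} \<times> N)" by (rule card_image_le) (use fin in simp)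
  also have "\<dots> = p * card N" by (simp add: card_cartesian_product)
  finally show ?thesis .
qed

lemma CM_left:
  assumes N: "N \<lhd> G" and g1: "g1 \<in> carrier G" and g2: "g2 \<in> carrier G" and h: "h \<in> carrier G"
    and c1: "comm G g1 h \<in> N" and c2: "comm G g2 h \<in> N"
  shows "comm G (g1 \<otimes> g2) h \<in> N"
proof -
  have sg: "subgroup N G" using N by (rule normal_imp_subgroup)
  have "inv g2 \<otimes> comm G g1 h \<otimes> g2 \<in> N" using normal.inv_op_closed1[OF N g2 c1] .
  hence "inv g2 \<otimes> comm G g1 h \<otimes> g2 \<otimes> comm G g2 h \<in> N" using subgroup.m_closed[OF sg _ c2] by simp
  thus ?thesis using comm_mult_left[OF g1 g2 h] by simp
qed

lemma CM_right:
  assumes N: "N \<lhd> G" and g1: "g1 \<in> carrier G" and g2: "g2 \<in> carrier G" and h: "h \<in> carrier G"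
    and c1: "comm G h g1 \<in> N" and c2: "comm G h g2 \<in> N"
  shows "comm G h (g1 \<otimes> g2) \<in> N"
proof -
  have sg: "subgroup N G" using N by (rule normal_imp_subgroup)
  have "inv g2 \<otimes> comm G h g1 \<otimes> g2 \<in> N" using normal.inv_op_closed1[OF N g2 c1] .
  hence "comm G h g2 \<otimes> (inv g2 \<otimes> comm G h g1 \<otimes> g2) \<in> N" using subgroup.m_closed[OF sg c2] by simp
  thus ?thesis using comm_mult_right[OF h g1 g2] g1 g2 h by (simp add: m_assoc)
qed

lemma CM_sym:
  assumes N: "N \<lhd> G" and g: "g \<in> carrier G" and h: "h \<in> carrier G" and c: "comm G g h \<in> N"
  shows "comm G h g \<in> N"
  using subgroup.m_inv_closed[OF normal_imp_subgroup[OF N] c] comm_inv[OF g h] by simp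

lemma comm_one_left[simp]: "g \<in> carrier G \<Longrightarrow> comm G \<one> g = \<one>"
  by (simp add: comm_def)
lemma comm_one_right[simp]: "g \<in> carrier G \<Longrightarrow> comm G g \<one> = \<one>"
  by (simp add: comm_def)
lemma comm_self[simp]: "g \<in> carrier G \<Longrightarrow> comm G g g = \<one>"
  by (simp add: comm_def m_assoc)

lemma sg_above_derived_normal:
  assumes H: "subgroup H G" and D: "lcs G 1 \<subseteq> H"
  shows "H \<lhd> G"
proof (rule normal_invI[OF H])
  fix x h assume x: "x \<in> carrier G" and h: "h \<in> H"
  have hc: "h \<in> carrier G" using subgroup.mem_carrier[OF H h] .
  have "comm G h (inv x) \<in> lcs G 1" using lcs_mem[of h 0 "inv x"] x hc by simp
  with D have "comm G h (inv x) \<in> H" by (rule subsetD)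
  hence "h \<otimes> comm G h (inv x) \<in> H" using subgroup.m_closed[OF H h] by simp
  moreover have "h \<otimes> comm G h (inv x) = x \<otimes> h \<otimes> inv x" using x hc by (simp add: comm_def m_assoc)
  ultimately show "x \<otimes> h \<otimes> inv x \<in> H" by simp
qed

end


locale P7 = group +
  fixes p :: nat
  assumes pprime: "Factorial_Ring.prime p" and p5: "5 \<le> p" and cardG: "card (carrier G) = p^7"
    and l5: "lcs G 5 = {\<one>}" and l4: "lcs G 4 \<noteq> {\<one>}"
    and Acomm: "\<And>x y. x \<in> lcs G 1 \<Longrightarrow> y \<in> lcs G 1 \<Longrightarrow> x \<otimes> y = y \<otimes> x"
    and Aexp: "\<And>x. x \<in> lcs G 1 \<Longrightarrow> x [^] p = \<one>"
    and cardA: "card (lcs G 1) = p^5"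
begin

abbreviation "AA \<equiv> lcs G 1"
abbreviation "B3 \<equiv> lcs G 2"
abbreviation "B4 \<equiv> lcs G 3"
abbreviation "B5 \<equiv> lcs G 4"

lemma p0: "p > 0" using p5 by simp
lemma p1: "p > 1" using p5 by simp

lemma finG: "finite (carrier G)"
proof -
  have "card (carrier G) > 0" using cardG p0 by simp
  thus ?thesis by (metis card_gt_0_iff)
qed

lemma ordG: "order G = p^7" using cardG by (simp add: order_def)

lemma fin_sub: "H \<subseteq> carrier G \<Longrightarrow> finite H"
  using finG finite_subset by blast

lemma sg_dvd:
  assumes H: "subgroup H G" and K: "subgroup K G" and HK: "H \<subseteq> K"
  shows "card H dvd card K"
proof -
  interpret K: group "G\<lparr>carrier := K\<rparr>" using subgroup.subgroup_is_group[OF K is_group] .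
  have "subgroup H (G\<lparr>carrier := K\<rparr>)" using subgroup_incl[OF H K HK] .
  hence "card (rcosets\<^bsub>G\<lparr>carrier := K\<rparr>\<^esub> H) * card H = order (G\<lparr>carrier := K\<rparr>)"
    by (rule K.lagrange)
  hence "card (rcosets\<^bsub>G\<lparr>carrier := K\<rparr>\<^esub> H) * card H = card K" by (simp add: order_def)
  thus ?thesis by (metis dvd_triv_right)
qed

lemma card_sg: "subgroup H G \<Longrightarrow> \<exists>i\<le>7. card H = p^i"
proof -
  assume H: "subgroup H G"
  have "card H dvd card (carrier G)" using sg_dvd[OF H subgroup_self subgroup.subset[OF H]] .
  thus ?thesis using divides_primepow_nat[OF pprime] cardG by simp
qed

lemma sg_strict:
  assumes H: "subgroup H G" and K: "subgroup K G" and HK: "H \<subseteq> K" and ne: "H \<noteq> K"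
  shows "p * card H \<le> card K"
proof -
  obtain i where i: "card H = p^i" using card_sg[OF H] by blast
  obtain j where j: "card K = p^j" using card_sg[OF K] by blast
  have "finite K" using fin_sub[OF subgroup.subset[OF K]] .
  hence "card H < card K" using HK ne by (meson psubsetI psubset_card_mono)
  hence "i < j" using i j p1 by simp
  hence "p^(Suc i) \<le> p^j" using p1 by (simp only: power_increasing_iff)
  thus ?thesis using i j by simp
qed

lemma sg_card_eq:
  assumes HK: "H \<subseteq> K" and K: "K \<subseteq> carrier G" and c: "card K \<le> card H"
  shows "H = K"
  using card_seteq[OF fin_sub[OF K] HK c] .

lemma lcs_ne: "k \<le> 4 \<Longrightarrow> lcs G (Suc k) \<noteq> lcs G k"
proof
  assume k: "k \<le> 4" and eq: "lcs G (Suc k) = lcs G k"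
  have "lcs G (k + (5 - k)) = lcs G k" using lcs_stable[OF eq] .
  hence "lcs G k = {\<one>}" using k l5 by simp
  moreover have "lcs G 4 \<subseteq> lcs G k" using lcs_mono k by blast
  ultimately have "lcs G 4 \<subseteq> {\<one>}" by simp
  moreover have "\<one> \<in> lcs G 4" using subgroup.one_closed[OF lcs_sg] .
  ultimately show False using l4 by blast
qed

lemma ch1: "AA \<subseteq> carrier G" using lcs_sub .
lemma ch2: "B3 \<subseteq> AA" using lcs_mono[of 1 2] by simp
lemma ch3: "B4 \<subseteq> B3" using lcs_mono[of 2 3] by simp
lemma ch4: "B5 \<subseteq> B4" using lcs_mono[of 3 4] by simp

lemma inA: "1 \<le> n \<Longrightarrow> x \<in> lcs G n \<Longrightarrow> x \<in> AA"
  using lcs_mono[of 1 n] by blast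

lemma inA3: "x \<in> B3 \<Longrightarrow> x \<in> AA" using ch2 by blast
lemma inA4: "x \<in> B4 \<Longrightarrow> x \<in> AA" using ch2 ch3 by blast
lemma inA5: "x \<in> B5 \<Longrightarrow> x \<in> AA" using ch2 ch3 ch4 by blast
lemma inC: "x \<in> AA \<Longrightarrow> x \<in> carrier G" using ch1 by blast

lemma cm1: "x \<in> carrier G \<Longrightarrow> g \<in> carrier G \<Longrightarrow> comm G x g \<in> AA"
  using lcs_mem[of x 0 g] by simp
lemma cm2: "x \<in> AA \<Longrightarrow> g \<in> carrier G \<Longrightarrow> comm G x g \<in> B3"
  using lcs_mem[of x 1 g] by (simp add: numeral_2_eq_2)
lemma cm3: "x \<in> B3 \<Longrightarrow> g \<in> carrier G \<Longrightarrow> comm G x g \<in> B4"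
  using lcs_mem[of x 2 g] by (simp add: numeral_3_eq_3 numeral_2_eq_2)
lemma cm4: "x \<in> B4 \<Longrightarrow> g \<in> carrier G \<Longrightarrow> comm G x g \<in> B5"
  using lcs_mem[of x 3 g] by (simp add: eval_nat_numeral)
lemma cm5: "x \<in> B5 \<Longrightarrow> g \<in> carrier G \<Longrightarrow> comm G x g = \<one>"
  using lcs_mem[of x 4 g] l5 by (simp add: eval_nat_numeral)

lemma AAc: "x \<in> AA \<Longrightarrow> y \<in> AA \<Longrightarrow> x \<otimes> y = y \<otimes> x" by (rule Acomm)
lemma AAlc: "x \<in> AA \<Longrightarrow> y \<in> AA \<Longrightarrow> z \<in> carrier G \<Longrightarrow> x \<otimes> (y \<otimes> z) = y \<otimes> (x \<otimes> z)"
  by (simp add: m_assoc[symmetric] AAc inC)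

lemma AAsg: "subgroup AA G" by (rule lcs_sg)
lemma AAm: "x \<in> AA \<Longrightarrow> y \<in> AA \<Longrightarrow> x \<otimes> y \<in> AA" by (rule subgroup.m_closed[OF AAsg])
lemma AAi: "x \<in> AA \<Longrightarrow> inv x \<in> AA" by (rule subgroup.m_inv_closed[OF AAsg])
lemma AAp: "x \<in> AA \<Longrightarrow> x [^] (k::nat) \<in> AA" by (rule sg_pow[OF AAsg])
lemma AA1: "\<one> \<in> AA" by (rule subgroup.one_closed[OF AAsg])

lemma cm_AA: "x \<in> AA \<Longrightarrow> y \<in> AA \<Longrightarrow> comm G x y = \<one>"
  using comm_one_iff[OF inC inC] AAc by simp

lemma cm_hom:
  assumes x: "x \<in> AA" and y: "y \<in> AA" and g: "g \<in> carrier G"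
  shows "comm G (x \<otimes> y) g = comm G x g \<otimes> comm G y g"
proof -
  have c: "comm G x g \<in> AA" using cm2[OF x g] ch2 by blast
  have "inv y \<otimes> comm G x g \<otimes> y = comm G x g"
    using AAc[OF c y] inC[OF c] inC[OF y] by (simp add: m_assoc)
  thus ?thesis using comm_mult_left[OF inC[OF x] inC[OF y] g] by simp
qed

lemma cm_inv:
  assumes x: "x \<in> AA" and g: "g \<in> carrier G"
  shows "comm G (inv x) g = inv (comm G x g)"
proof -
  have "comm G (x \<otimes> inv x) g = comm G x g \<otimes> comm G (inv x) g" using cm_hom[OF x AAi[OF x] g] .
  hence "\<one> = comm G x g \<otimes> comm G (inv x) g" using x g inC by simp
  thus ?thesis using x g inC by (metis comm_closed inv_closed inv_comm inv_equality)
qed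

lemma cm_pow:
  assumes x: "x \<in> AA" and g: "g \<in> carrier G"
  shows "comm G (x [^] (k::nat)) g = (comm G x g) [^] k"
proof (induct k)
  case 0 thus ?case using g by simp
next
  case (Suc k)
  have "comm G (x [^] Suc k) g = comm G (x [^] k) g \<otimes> comm G x g"
    using cm_hom[OF AAp[OF x] x g] by simp
  thus ?case using Suc by simp
qed

lemma AApow_distrib: "x \<in> AA \<Longrightarrow> y \<in> AA \<Longrightarrow> (x \<otimes> y) [^] (k::nat) = x [^] k \<otimes> y [^] k"
  using pow_mult_distrib[OF AAc inC inC] by simp

lemma cj_AA: "x \<in> AA \<Longrightarrow> y \<in> AA \<Longrightarrow> inv y \<otimes> x \<otimes> y = x"
  using AAc[of x y] inC by (simp add: m_assoc)

lemma cm_swap: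
  assumes x: "x \<in> AA" and g: "g \<in> carrier G" and h: "h \<in> carrier G"
  shows "comm G (comm G x g) h = comm G (comm G x h) g"
proof -
  define cj where "cj = (\<lambda>y k. inv k \<otimes> y \<otimes> k)"
  have xc: "x \<in> carrier G" using inC[OF x] .
  have cjA: "\<And>k. k \<in> carrier G \<Longrightarrow> cj x k \<in> AA"
  proof -
    fix k assume k: "k \<in> carrier G"
    have "cj x k = x \<otimes> comm G x k" unfolding cj_def using xc k by (simp add: comm_def m_assoc)
    thus "cj x k \<in> AA" using AAm[OF x] cm2[OF x k] ch2 by auto
  qed
  have cjc: "\<And>k. k \<in> carrier G \<Longrightarrow> cj x k \<in> carrier G" using cjA inC by blast
  have key: "\<And>g h. g \<in> carrier G \<Longrightarrow> h \<in> carrier G \<Longrightarrow>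
      comm G (comm G x g) h = inv (cj x g) \<otimes> (x \<otimes> (inv (cj x h) \<otimes> cj x (g \<otimes> h)))"
    unfolding cj_def comm_def using xc by (simp add: m_assoc inv_mult_group)
  have gh: "cj x (g \<otimes> h) = cj x (h \<otimes> g)"
  proof -
    have e: "g \<otimes> h = h \<otimes> g \<otimes> comm G g h" using comm_swap_eq[OF g h] .
    have "cj x (g \<otimes> h) = inv (comm G g h) \<otimes> cj x (h \<otimes> g) \<otimes> comm G g h"
      unfolding e cj_def using xc g h by (simp add: m_assoc inv_mult_group)
    also have "\<dots> = cj x (h \<otimes> g)" using cj_AA[OF cjA cm1[OF g h]] h g by simp
    finally show ?thesis .
  qed
  have i1: "inv (cj x g) \<in> AA" using AAi[OF cjA[OF g]] .
  have i2: "inv (cj x h) \<in> AA" using AAi[OF cjA[OF h]] .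
  have c3: "cj x (h \<otimes> g) \<in> carrier G" using cjc h g by simp
  have "comm G (comm G x g) h = inv (cj x g) \<otimes> (x \<otimes> (inv (cj x h) \<otimes> cj x (h \<otimes> g)))"
    using key[OF g h] gh by simp
  also have "\<dots> = inv (cj x h) \<otimes> (x \<otimes> (inv (cj x g) \<otimes> cj x (h \<otimes> g)))"
    using AAlc[OF i1 x] AAlc[OF i1 i2] AAlc[OF x i2] i1 i2 x c3 inC
    by (metis AAm m_closed)
  also have "\<dots> = comm G (comm G x h) g" using key[OF h g] by simp
  finally show ?thesis .
qed

end


declare lcs.simps(2)[simp del]

context P7 begin

lemma e12: "p * p = p^2" by (simp add: power2_eq_square)
lemma e23: "p * p^2 = p^3" by (subst power_Suc[symmetric]) simp
lemma e34: "p * p^3 = p^4" by (subst power_Suc[symmetric]) simp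
lemma e45: "p * p^4 = p^5" by (subst power_Suc[symmetric]) simp
lemma e56: "p * p^5 = p^6" by (subst power_Suc[symmetric]) simp
lemma e67: "p * p^6 = p^7" by (subst power_Suc[symmetric]) simp

lemma AAn: "AA \<lhd> G" by (rule lcs_normal)
lemma lcsn: "lcs G n \<lhd> G" by (rule lcs_normal)

lemma CM_pow_left:
  assumes N: "N \<lhd> G" and g: "g \<in> carrier G" and h: "h \<in> carrier G" and c: "comm G g h \<in> N"
  shows "comm G (g [^] (k::nat)) h \<in> N"
proof (induct k)
  case 0 thus ?case using h subgroup.one_closed[OF normal_imp_subgroup[OF N]] by simp
next
  case (Suc k) thus ?case using CM_left[OF N _ g h Suc c] g by simp
qed

lemma CM_pow_right:
  assumes N: "N \<lhd> G" and g: "g \<in> carrier G" and h: "h \<in> carrier G" and c: "comm G h g \<in> N"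
  shows "comm G h (g [^] (k::nat)) \<in> N"
  using CM_sym[OF N _ h CM_pow_left[OF N g h CM_sym[OF N h g c]]] g by simp

lemma notcyc:
  assumes a: "a \<in> carrier G" and aA: "a \<notin> AA"
  shows "pcl G a AA \<noteq> carrier G"
proof
  assume eq: "pcl G a AA = carrier G"
  have N: "B3 \<lhd> G" by (rule lcs_normal)
  have ca: "\<And>x. x \<in> carrier G \<Longrightarrow> comm G x a \<in> B3"
  proof -
    fix x assume "x \<in> carrier G"
    hence "x \<in> pcl G a AA" using eq by simp
    then obtain i y where y: "y \<in> AA" and xe: "x = a [^] (i::nat) \<otimes> y" by (rule pclE)
    have "comm G (a [^] i) a \<in> B3"
      using CM_pow_left[OF N a a] a subgroup.one_closed[OF lcs_sg] by simp
    moreover have "comm G y a \<in> B3" using cm2[OF y a] .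
    ultimately show "comm G x a \<in> B3" unfolding xe using CM_left[OF N _ inC[OF y] a] a by simp
  qed
  have "\<And>x g. x \<in> carrier G \<Longrightarrow> g \<in> carrier G \<Longrightarrow> comm G x g \<in> B3"
  proof -
    fix x g assume x: "x \<in> carrier G" and g: "g \<in> carrier G"
    hence "g \<in> pcl G a AA" using eq by simp
    then obtain i y where y: "y \<in> AA" and ge: "g = a [^] (i::nat) \<otimes> y" by (rule pclE)
    have "comm G x (a [^] i) \<in> B3" using CM_pow_right[OF N a x ca[OF x]] .
    moreover have "comm G x y \<in> B3" using CM_sym[OF N inC[OF y] x cm2[OF y x]] .
    ultimately show "comm G x g \<in> B3" unfolding ge using CM_right[OF N _ inC[OF y] x] a by simp
  qed
  hence "lcs G (Suc 0) \<subseteq> B3" by (intro lcs_min[OF lcs_sg]) simp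
  hence "AA = B3" using ch2 by simp
  thus False using lcs_ne[of 1] by (simp add: numeral_2_eq_2)
qed

lemma coprime_pm1:
  assumes i: "i \<ge> 1" shows "coprime (p^7) (p * i - 1)"
proof -
  have "\<not> p dvd (p * i - 1)"
  proof
    assume d: "p dvd (p * i - 1)"
    have "p dvd p * i" by simp
    hence "p dvd (p * i - (p * i - 1))" using d by (rule dvd_diff_nat)
    moreover have "p * i - (p * i - 1) = 1" using i p0 by (simp add: Suc_le_eq)
    ultimately show False using p1 by simp
  qed
  hence "coprime p (p * i - 1)" using prime_imp_coprime[OF pprime] by blast
  thus ?thesis by simp
qed

lemma pow_p_in:
  assumes N: "N \<lhd> G" and g: "g \<in> carrier G" and c: "card (pcl G g N) \<le> p * card N"
  shows "g [^] p \<in> N"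
proof (rule ccontr)
  assume np: "g [^] p \<notin> N"
  have sg: "subgroup N G" using N by (rule normal_imp_subgroup)
  have gp: "g [^] p \<in> carrier G" using g by simp
  have S1: "subgroup (pcl G (g [^] p) N) G" using pcl_sg[OF finG N gp] .
  have S2: "subgroup (pcl G g N) G" using pcl_sg[OF finG N g] .
  have sub: "pcl G (g [^] p) N \<subseteq> pcl G g N"
  proof
    fix x assume "x \<in> pcl G (g [^] p) N"
    then obtain k n where n: "n \<in> N" and xe: "x = (g [^] p) [^] (k::nat) \<otimes> n" by (rule pclE)
    have "x = g [^] (p * k) \<otimes> n" unfolding xe using g by (simp add: nat_pow_pow)
    thus "x \<in> pcl G g N" using pclI[OF n] by simp
  qed
  have NS: "N \<subseteq> pcl G (g [^] p) N" using pcl_incl[OF subgroup.subset[OF sg]] by blast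
  have "g [^] p \<in> pcl G (g [^] p) N" using pcl_gen1[OF gp subgroup.one_closed[OF sg]] .
  hence "N \<noteq> pcl G (g [^] p) N" using np by blast
  hence "p * card N \<le> card (pcl G (g [^] p) N)" using sg_strict[OF sg S1 NS] by simp
  moreover have "card (pcl G (g [^] p) N) \<le> card (pcl G g N)"
    using card_mono[OF fin_sub[OF subgroup.subset[OF S2]] sub] .
  ultimately have "card (pcl G g N) \<le> card (pcl G (g [^] p) N)" using c by simp
  hence eq: "pcl G (g [^] p) N = pcl G g N" using sg_card_eq[OF sub subgroup.subset[OF S2]] by simp
  have "g \<in> pcl G g N" using pcl_gen1[OF g subgroup.one_closed[OF sg]] .
  hence "g \<in> pcl G (g [^] p) N" using eq by simp
  then obtain i n where n: "n \<in> N" and ge: "g = (g [^] p) [^] (i::nat) \<otimes> n" by (rule pclE)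
  have nc: "n \<in> carrier G" using subgroup.mem_carrier[OF sg n] .
  show False
  proof (cases "i = 0")
    case True
    hence "g = n" using ge nc by simp
    hence "g [^] p \<in> N" using sg_pow[OF sg n] by simp
    thus False using np by simp
  next
    case False
    hence i1: "i \<ge> 1" by simp
    define m where "m = p * i - 1"
    have pi: "p * i = Suc m" unfolding m_def using i1 p0 by (simp add: Suc_le_eq)
    have "g = g [^] m \<otimes> g \<otimes> n" using ge g by (simp add: nat_pow_pow pi)
    also have "\<dots> = g \<otimes> (g [^] m \<otimes> n)" using g nc nat_pow_comm[OF g, of m 1] by (simp add: m_assoc)
    finally have "g \<otimes> \<one> = g \<otimes> (g [^] m \<otimes> n)" using g by simp
    hence "\<one> = g [^] m \<otimes> n" using g nc by (metis l_cancel nat_pow_closed m_closed one_closed)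
    hence "g [^] m = inv n" using g nc by (metis inv_equality nat_pow_closed)
    hence gm: "g [^] m \<in> N" using subgroup.m_inv_closed[OF sg n] by simp
    have go: "g [^] (p^7) \<in> N" using pow_order_eq_1[OF g] ordG subgroup.one_closed[OF sg] by simp
    have "coprime (p^7) m" unfolding m_def using coprime_pm1[OF i1] .
    hence "g \<in> N" using sg_coprime_pow[OF sg g go gm] p0 by simp
    hence "g [^] p \<in> N" using sg_pow[OF sg] by blast
    thus False using np by simp
  qed
qed

lemma pclA_props:
  assumes g: "g \<in> carrier G" and gA: "g \<notin> AA"
  shows "subgroup (pcl G g AA) G" "pcl G g AA \<lhd> G" "card (pcl G g AA) = p^6" "g [^] p \<in> AA"
proof -
  show S: "subgroup (pcl G g AA) G" using pcl_sg[OF finG AAn g] .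
  have sub: "AA \<subseteq> pcl G g AA" using pcl_incl[OF ch1] by blast
  show "pcl G g AA \<lhd> G" using sg_above_derived_normal[OF S sub] .
  have "g \<in> pcl G g AA" using pcl_gen1[OF g AA1] .
  hence "AA \<noteq> pcl G g AA" using gA by blast
  hence lo: "p * p^5 \<le> card (pcl G g AA)" using sg_strict[OF AAsg S sub] cardA by simp
  have "pcl G g AA \<noteq> carrier G" using notcyc[OF g gA] .
  hence "p * card (pcl G g AA) \<le> p^7"
    using sg_strict[OF S subgroup_self subgroup.subset[OF S]] cardG by simp
  moreover have "(p::nat)^7 = p * p^6" by (subst power_Suc[symmetric]) simp
  ultimately have "p * card (pcl G g AA) \<le> p * p^6" by simp
  hence "card (pcl G g AA) \<le> p^6" using p0 by simp
  thus "card (pcl G g AA) = p^6" using lo e56 by simp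
  hence "card (pcl G g AA) \<le> p * card AA" using cardA e56 by simp
  thus "g [^] p \<in> AA" using pow_p_in[OF AAn g] by simp
qed

lemma all_pow_p: "g \<in> carrier G \<Longrightarrow> g [^] p \<in> AA"
proof (cases "g \<in> AA")
  case True thus ?thesis by (rule AAp)
next
  case False assume "g \<in> carrier G" thus ?thesis using pclA_props(4) False by blast
qed

end


context P7 begin

definition gen2 :: "'a \<Rightarrow> 'a \<Rightarrow> bool" where
  "gen2 a b \<longleftrightarrow> a \<in> carrier G \<and> b \<in> carrier G \<and> a \<notin> AA \<and> b \<notin> pcl G a AA"

lemma AA_ne: "AA \<noteq> carrier G"
  using lcs_ne[of 0] by simp

lemma gen2_ex: "\<exists>a b. gen2 a b"
proof -
  obtain a where a: "a \<in> carrier G" "a \<notin> AA" using AA_ne ch1 by blast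
  have "pcl G a AA \<noteq> carrier G" using notcyc[OF a] .
  moreover have "pcl G a AA \<subseteq> carrier G" using subgroup.subset[OF pclA_props(1)[OF a]] .
  ultimately obtain b where "b \<in> carrier G" "b \<notin> pcl G a AA" by blast
  thus ?thesis using a unfolding gen2_def by blast
qed

lemma gen2D: assumes "gen2 a b" shows "a \<in> carrier G" "b \<in> carrier G" "a \<notin> AA" "b \<notin> pcl G a AA"
  using assms unfolding gen2_def by auto

lemma gen2_full:
  assumes ab: "gen2 a b" shows "pcl G b (pcl G a AA) = carrier G"
proof -
  note d = gen2D[OF ab]
  have Hn: "pcl G a AA \<lhd> G" using pclA_props(2)[OF d(1,3)] .
  have Hs: "subgroup (pcl G a AA) G" using pclA_props(1)[OF d(1,3)] .
  have S: "subgroup (pcl G b (pcl G a AA)) G" using pcl_sg[OF finG Hn d(2)] .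
  have sub: "pcl G a AA \<subseteq> pcl G b (pcl G a AA)" using pcl_incl[OF subgroup.subset[OF Hs]] by blast
  have "b \<in> pcl G b (pcl G a AA)" using pcl_gen1[OF d(2) subgroup.one_closed[OF Hs]] .
  hence "pcl G a AA \<noteq> pcl G b (pcl G a AA)" using d(4) by blast
  hence "p * p^6 \<le> card (pcl G b (pcl G a AA))" using sg_strict[OF Hs S sub] pclA_props(3)[OF d(1,3)] by simp
  hence "card (carrier G) \<le> card (pcl G b (pcl G a AA))" using cardG e67 by simp
  thus ?thesis using sg_card_eq[OF subgroup.subset[OF S] subset_refl] by simp
qed

lemma gen2_rep:
  assumes ab: "gen2 a b" and g: "g \<in> carrier G"
  shows "\<exists>i j y. y \<in> AA \<and> g = b [^] (j::nat) \<otimes> (a [^] (i::nat) \<otimes> y)"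
proof -
  have "g \<in> pcl G b (pcl G a AA)" using gen2_full[OF ab] g by simp
  then obtain j h where h: "h \<in> pcl G a AA" and ge: "g = b [^] (j::nat) \<otimes> h" by (rule pclE)
  obtain i y where y: "y \<in> AA" and he: "h = a [^] (i::nat) \<otimes> y" using h by (rule pclE)
  show ?thesis using y ge he by blast
qed

lemma gen2_closure:
  assumes ab: "gen2 a b" and aT: "a \<in> T" and bT: "b \<in> T" and AT: "AA \<subseteq> T"
    and cl: "\<And>x y. x \<in> T \<Longrightarrow> y \<in> T \<Longrightarrow> x \<otimes> y \<in> T" and g: "g \<in> carrier G"
  shows "g \<in> T"
proof -
  have pw: "\<And>t k. t \<in> T \<Longrightarrow> t [^] (k::nat) \<in> T"
  proof -
    fix t k assume t: "t \<in> T"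
    show "t [^] (k::nat) \<in> T"
    proof (induct k)
      case 0 thus ?case using AT AA1 by auto
    next
      case (Suc k) thus ?case using cl[OF Suc t] by simp
    qed
  qed
  obtain i j y where y: "y \<in> AA" and ge: "g = b [^] (j::nat) \<otimes> (a [^] (i::nat) \<otimes> y)"
    using gen2_rep[OF ab g] by blast
  have "y \<in> T" using AT y by blast
  thus ?thesis unfolding ge using cl pw aT bT by blast
qed

lemma gen2_sym:
  assumes ab: "gen2 a b" shows "gen2 b a"
proof -
  note d = gen2D[OF ab]
  have bA: "b \<notin> AA" using d(4) pcl_incl[OF ch1] by blast
  have "a \<notin> pcl G b AA"
  proof
    assume a: "a \<in> pcl G b AA"
    have Sb: "subgroup (pcl G b AA) G" using pclA_props(1)[OF d(2) bA] .
    have sub: "pcl G a AA \<subseteq> pcl G b AA"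
      using pcl_in_sg[OF Sb a] pcl_incl[OF ch1, of _ b] by blast
    have "card (pcl G b AA) \<le> card (pcl G a AA)"
      using pclA_props(3)[OF d(2) bA] pclA_props(3)[OF d(1,3)] by simp
    hence "pcl G a AA = pcl G b AA" using sg_card_eq[OF sub subgroup.subset[OF Sb]] by simp
    moreover have "b \<in> pcl G b AA" using pcl_gen1[OF d(2) AA1] .
    ultimately show False using d(4) by simp
  qed
  thus ?thesis using d bA unfolding gen2_def by blast
qed

lemma ndvd_coprime: "\<not> p dvd k \<Longrightarrow> coprime k p"
  using prime_imp_coprime[OF pprime] by (simp add: coprime_commute)

lemma gen2_powb:
  assumes ab: "gen2 a b" and k: "\<not> p dvd k"
  shows "gen2 (b [^] k) a"
proof -
  note d = gen2D[OF ab]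
  note d' = gen2D[OF gen2_sym[OF ab]]
  have k0: "k \<noteq> 0" using k by (metis dvd_0_right)
  have "b [^] k \<notin> AA"
  proof
    assume "b [^] k \<in> AA"
    hence "b \<in> AA" using sg_coprime_pow[OF AAsg d(2) _ all_pow_p[OF d(2)] ndvd_coprime[OF k] k0] by simp
    thus False using d' by simp
  qed
  moreover have "a \<notin> pcl G (b [^] k) AA"
  proof
    assume "a \<in> pcl G (b [^] k) AA"
    moreover have "pcl G (b [^] k) AA \<subseteq> pcl G b AA"
    proof -
      have "AA \<subseteq> pcl G b AA" using pcl_incl[OF ch1] by blast
      thus ?thesis using pcl_in_sg[OF pclA_props(1)[OF d(2) d'(3)] pcl_gen[OF d(2) AA1]] by blast
    qed
    ultimately show False using d'(4) by blast
  qed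
  ultimately show ?thesis using d unfolding gen2_def by simp
qed

lemma gen2_indep:
  assumes ab: "gen2 a b" and x: "a [^] (k::nat) \<otimes> b [^] (l::nat) \<in> AA"
  shows "p dvd k \<and> p dvd l"
proof -
  note d = gen2D[OF ab]
  have Sa: "subgroup (pcl G a AA) G" using pclA_props(1)[OF d(1,3)] .
  have ak: "a [^] k \<in> pcl G a AA" using pcl_gen[OF d(1) AA1] .
  have xa: "a [^] k \<otimes> b [^] l \<in> pcl G a AA" using pcl_incl[OF ch1 x] .
  have "inv (a [^] k) \<otimes> (a [^] k \<otimes> b [^] l) \<in> pcl G a AA"
    using subgroup.m_closed[OF Sa subgroup.m_inv_closed[OF Sa ak] xa] .
  hence bl: "b [^] l \<in> pcl G a AA" using d by simp
  have bp: "b [^] p \<in> pcl G a AA" using pcl_incl[OF ch1 all_pow_p[OF d(2)]] .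
  have pl: "p dvd l"
  proof (rule ccontr)
    assume nd: "\<not> p dvd l"
    hence "l \<noteq> 0" by (metis dvd_0_right)
    hence "b \<in> pcl G a AA" using sg_coprime_pow[OF Sa d(2) bl bp ndvd_coprime[OF nd]] by simp
    thus False using d by simp
  qed
  then obtain l' where l': "l = p * l'" by blast
  have blA: "b [^] l \<in> AA" unfolding l' using AAp[OF all_pow_p[OF d(2)]] d by (simp add: nat_pow_pow)
  have "a [^] k \<otimes> b [^] l \<otimes> inv (b [^] l) \<in> AA" using AAm[OF x AAi[OF blA]] .
  hence akA: "a [^] k \<in> AA" using d by (simp add: m_assoc)
  have pk: "p dvd k"
  proof (rule ccontr)
    assume nd: "\<not> p dvd k"
    hence "k \<noteq> 0" by (metis dvd_0_right)
    hence "a \<in> AA" using sg_coprime_pow[OF AAsg d(1) akA all_pow_p[OF d(1)] ndvd_coprime[OF nd]] by simp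
    thus False using d by simp
  qed
  show ?thesis using pk pl by simp
qed

lemma Cm_sg:
  assumes N: "subgroup N G" and NA: "N \<subseteq> AA" and g: "g \<in> carrier G"
  shows "subgroup (Cm G N g) G"
proof
  show "Cm G N g \<subseteq> carrier G"
    using subgroup.subset[OF N] g by (auto simp: Cm_def)
next
  fix x y assume "x \<in> Cm G N g" "y \<in> Cm G N g"
  then obtain u v where u: "u \<in> N" "x = comm G u g" and v: "v \<in> N" "y = comm G v g"
    by (auto simp: Cm_def)
  have uA: "u \<in> AA" "v \<in> AA" using NA u(1) v(1) by auto
  have "x \<otimes> y = comm G (u \<otimes> v) g" using cm_hom[OF uA g] u v by simp
  thus "x \<otimes> y \<in> Cm G N g" using CmI[OF subgroup.m_closed[OF N u(1) v(1)]] by simp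
next
  show "\<one> \<in> Cm G N g" using CmI[OF subgroup.one_closed[OF N], of g] g by simp
next
  fix x assume "x \<in> Cm G N g"
  then obtain u where u: "u \<in> N" "x = comm G u g" by (auto simp: Cm_def)
  have uA: "u \<in> AA" using NA u(1) by auto
  have "inv x = comm G (inv u) g" using cm_inv[OF uA g] u by simp
  thus "inv x \<in> Cm G N g" using CmI[OF subgroup.m_inv_closed[OF N u(1)]] by simp
qed

lemma sprod_in_sg:
  assumes M: "subgroup M G" and H: "H \<subseteq> M" and K: "K \<subseteq> M"
  shows "sprod G H K \<subseteq> M"
proof
  fix x assume "x \<in> sprod G H K"
  then obtain h k where "h \<in> H" "k \<in> K" "x = h \<otimes> k" by (rule sprodE)
  thus "x \<in> M" using subgroup.m_closed[OF M] H K by blast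
qed

lemma sprod_sg:
  assumes H: "subgroup H G" and K: "subgroup K G" and HA: "H \<subseteq> AA" and KA: "K \<subseteq> AA"
  shows "subgroup (sprod G H K) G"
proof
  show "sprod G H K \<subseteq> carrier G" using sprod_in_sg[OF subgroup_self] subgroup.subset[OF H] subgroup.subset[OF K] by blast
next
  fix x y assume x: "x \<in> sprod G H K" and y: "y \<in> sprod G H K"
  obtain h k where hk: "h \<in> H" "k \<in> K" "x = h \<otimes> k" using x by (rule sprodE)
  obtain h' k' where hk': "h' \<in> H" "k' \<in> K" "y = h' \<otimes> k'" using y by (rule sprodE)
  have A: "h \<in> AA" "k \<in> AA" "h' \<in> AA" "k' \<in> AA" using hk hk' HA KA by auto
  have "x \<otimes> y = (h \<otimes> h') \<otimes> (k \<otimes> k')"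
    unfolding hk(3) hk'(3) using A inC AAlc[OF A(2) A(3)] by (simp add: m_assoc)
  thus "x \<otimes> y \<in> sprod G H K"
    using sprodI[OF subgroup.m_closed[OF H hk(1) hk'(1)] subgroup.m_closed[OF K hk(2) hk'(2)]] by simp
next
  show "\<one> \<in> sprod G H K" using sprodI[OF subgroup.one_closed[OF H] subgroup.one_closed[OF K]] by simp
next
  fix x assume x: "x \<in> sprod G H K"
  obtain h k where hk: "h \<in> H" "k \<in> K" "x = h \<otimes> k" using x by (rule sprodE)
  have A: "h \<in> AA" "k \<in> AA" using hk HA KA by auto
  have "inv x = inv h \<otimes> inv k" unfolding hk(3) using A inC AAc[OF A] by (simp add: inv_mult_group)
  thus "inv x \<in> sprod G H K"
    using sprodI[OF subgroup.m_inv_closed[OF H hk(1)] subgroup.m_inv_closed[OF K hk(2)]] by simp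
qed

lemma lcs_gen:
  assumes ab: "gen2 a b" and n: "1 \<le> n"
  shows "lcs G (Suc n) = sprod G (Cm G (lcs G n) a) (Cm G (lcs G n) b)"
    (is "_ = ?P")
proof -
  note d = gen2D[OF ab]
  have NA: "lcs G n \<subseteq> AA" using lcs_mono[OF n] .
  have P1: "\<And>g. g \<in> carrier G \<Longrightarrow> Cm G (lcs G n) g \<subseteq> lcs G (Suc n)"
    using lcs_mem by (auto simp: Cm_def)
  have P1A: "\<And>g. g \<in> carrier G \<Longrightarrow> Cm G (lcs G n) g \<subseteq> AA"
    using P1 lcs_Suc_sub NA by blast
  have Ps: "subgroup ?P G"
    using sprod_sg[OF Cm_sg[OF lcs_sg NA d(1)] Cm_sg[OF lcs_sg NA d(2)] P1A[OF d(1)] P1A[OF d(2)]] .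
  have PS: "?P \<subseteq> lcs G (Suc n)" using sprod_in_sg[OF lcs_sg P1[OF d(1)] P1[OF d(2)]] .
  have PN: "?P \<subseteq> lcs G n" using PS lcs_Suc_sub by blast
  have one_a: "\<one> \<in> Cm G (lcs G n) a" using CmI[OF subgroup.one_closed[OF lcs_sg], of a n] d by simp
  have one_b: "\<one> \<in> Cm G (lcs G n) b" using CmI[OF subgroup.one_closed[OF lcs_sg], of b n] d by simp
  define T where "T = {g \<in> carrier G. \<forall>x\<in>lcs G n. comm G x g \<in> ?P}"
  have T: "carrier G \<subseteq> T"
  proof
    fix g assume g: "g \<in> carrier G"
    show "g \<in> T"
    proof (rule gen2_closure[OF ab _ _ _ _ g])
      show "a \<in> T" unfolding T_def
      proof (intro CollectI conjI ballI)
        show "a \<in> carrier G" using d by simp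
        fix x assume x: "x \<in> lcs G n"
        have "comm G x a \<otimes> \<one> \<in> ?P" by (rule sprodI[OF CmI[OF x] one_b])
        thus "comm G x a \<in> ?P" using lcs_carrier[OF x] d by simp
      qed
      show "b \<in> T" unfolding T_def
      proof (intro CollectI conjI ballI)
        show "b \<in> carrier G" using d by simp
        fix x assume x: "x \<in> lcs G n"
        have "\<one> \<otimes> comm G x b \<in> ?P" by (rule sprodI[OF one_a CmI[OF x]])
        thus "comm G x b \<in> ?P" using lcs_carrier[OF x] d by simp
      qed
      show "AA \<subseteq> T"
      proof
        fix y assume y: "y \<in> AA"
        have "\<And>x. x \<in> lcs G n \<Longrightarrow> comm G x y \<in> ?P"
          using cm_AA[OF _ y] NA subgroup.one_closed[OF Ps] by auto
        thus "y \<in> T" unfolding T_def using inC[OF y] by blast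
      qed
      fix u v assume u: "u \<in> T" and v: "v \<in> T"
      have uc: "u \<in> carrier G" and vc: "v \<in> carrier G" using u v unfolding T_def by auto
      have "\<And>x. x \<in> lcs G n \<Longrightarrow> comm G x (u \<otimes> v) \<in> ?P"
      proof -
        fix x assume x: "x \<in> lcs G n"
        have xc: "x \<in> carrier G" using lcs_carrier[OF x] .
        define y where "y = comm G x u"
        have yP: "y \<in> ?P" using u x unfolding T_def y_def by blast
        have yN: "y \<in> lcs G n" using PN yP by blast
        have yc: "y \<in> carrier G" using lcs_carrier[OF yN] .
        have cyv: "comm G y v \<in> ?P" using v yN unfolding T_def by blast
        have cxv: "comm G x v \<in> ?P" using v x unfolding T_def by blast
        have "comm G x (u \<otimes> v) = comm G x v \<otimes> (y \<otimes> comm G y v)"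
          unfolding y_def using comm_mult_right[OF xc uc vc] xc uc vc
          by (simp add: comm_def m_assoc)
        thus "comm G x (u \<otimes> v) \<in> ?P"
          using subgroup.m_closed[OF Ps cxv subgroup.m_closed[OF Ps yP cyv]] by simp
      qed
      thus "u \<otimes> v \<in> T" unfolding T_def using uc vc by blast
    qed
  qed
  have "lcs G (Suc n) \<subseteq> ?P"
    by (rule lcs_min[OF Ps]) (use T T_def in blast)
  thus ?thesis using PS by blast
qed

end


context P7 begin

lemma cm_elem:
  assumes t: "t \<in> AA" and m: "m \<in> AA" and g: "g \<in> carrier G"
  shows "comm G (t [^] (k::nat) \<otimes> m) g = (comm G t g) [^] k \<otimes> comm G m g"
  using cm_hom[OF AAp[OF t] m g] cm_pow[OF t g] by simp

lemma pcl_normal: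
  assumes t: "t \<in> AA" and M: "M \<lhd> G" and MA: "M \<subseteq> AA" and c: "\<And>g. g \<in> carrier G \<Longrightarrow> comm G t g \<in> M"
  shows "pcl G t M \<lhd> G"
proof (rule normal_invI[OF pcl_sg[OF finG M inC[OF t]]])
  fix x h assume x: "x \<in> carrier G" and h: "h \<in> pcl G t M"
  obtain k m where m: "m \<in> M" and he: "h = t [^] (k::nat) \<otimes> m" using h by (rule pclE)
  have tc: "t \<in> carrier G" using inC[OF t] .
  have mc: "m \<in> carrier G" using MA m inC by blast
  define e where "e = comm G t (inv x)"
  have eM: "e \<in> M" unfolding e_def using c x by simp
  have eA: "e \<in> AA" using eM MA by blast
  have m': "x \<otimes> m \<otimes> inv x \<in> M" using normal.inv_op_closed2[OF M x m] .
  have "x \<otimes> h \<otimes> inv x = (x \<otimes> t [^] k \<otimes> inv x) \<otimes> (x \<otimes> m \<otimes> inv x)"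
    unfolding he using x tc mc by (simp add: m_assoc)
  also have "x \<otimes> t [^] k \<otimes> inv x = (x \<otimes> t \<otimes> inv x) [^] k" using cj_pow[OF x tc] .
  also have "x \<otimes> t \<otimes> inv x = t \<otimes> e" unfolding e_def comm_def using x tc by (simp add: m_assoc)
  also have "(t \<otimes> e) [^] k = t [^] k \<otimes> e [^] k" using AApow_distrib[OF t eA] .
  finally have "x \<otimes> h \<otimes> inv x = t [^] k \<otimes> (e [^] k \<otimes> (x \<otimes> m \<otimes> inv x))"
    using tc inC[OF eA] x mc by (simp add: m_assoc)
  moreover have "e [^] k \<otimes> (x \<otimes> m \<otimes> inv x) \<in> M"
    using subgroup.m_closed[OF normal_imp_subgroup[OF M] sg_pow[OF normal_imp_subgroup[OF M] eM] m'] .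
  ultimately show "x \<otimes> h \<otimes> inv x \<in> pcl G t M" using pclI by simp
qed

lemma CMgen:
  assumes ab: "gen2 a b" and N: "N \<lhd> G" and BN: "B3 \<subseteq> N" and cba: "comm G b a \<in> N"
    and g: "g \<in> carrier G" and h: "h \<in> carrier G"
  shows "comm G g h \<in> N"
proof -
  note d = gen2D[OF ab]
  have sg: "subgroup N G" using N by (rule normal_imp_subgroup)
  have one: "\<one> \<in> N" using subgroup.one_closed[OF sg] .
  have AN: "\<And>y k. y \<in> AA \<Longrightarrow> k \<in> carrier G \<Longrightarrow> comm G y k \<in> N" using cm2 BN by blast
  have s1: "\<And>x. x \<in> carrier G \<Longrightarrow> comm G x a \<in> N"
  proof -
    fix x assume x: "x \<in> carrier G"
    have "x \<in> {x \<in> carrier G. comm G x a \<in> N}"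
    proof (rule gen2_closure[OF ab _ _ _ _ x])
      show "a \<in> {x \<in> carrier G. comm G x a \<in> N}" using d one by simp
      show "b \<in> {x \<in> carrier G. comm G x a \<in> N}" using d cba by simp
      show "AA \<subseteq> {x \<in> carrier G. comm G x a \<in> N}" using AN d inC by blast
    qed (use CM_left[OF N _ _ d(1)] in blast)
    thus "comm G x a \<in> N" by simp
  qed
  have s2: "\<And>x. x \<in> carrier G \<Longrightarrow> comm G x b \<in> N"
  proof -
    fix x assume x: "x \<in> carrier G"
    have "x \<in> {x \<in> carrier G. comm G x b \<in> N}"
    proof (rule gen2_closure[OF ab _ _ _ _ x])
      show "a \<in> {x \<in> carrier G. comm G x b \<in> N}" using d CM_sym[OF N d(2) d(1) cba] by simp
      show "b \<in> {x \<in> carrier G. comm G x b \<in> N}" using d one by simp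
      show "AA \<subseteq> {x \<in> carrier G. comm G x b \<in> N}" using AN d inC by blast
    qed (use CM_left[OF N _ _ d(2)] in blast)
    thus "comm G x b \<in> N" by simp
  qed
  have "h \<in> {y \<in> carrier G. comm G g y \<in> N}"
  proof (rule gen2_closure[OF ab _ _ _ _ h])
    show "a \<in> {y \<in> carrier G. comm G g y \<in> N}" using d s1[OF g] by simp
    show "b \<in> {y \<in> carrier G. comm G g y \<in> N}" using d s2[OF g] by simp
    show "AA \<subseteq> {y \<in> carrier G. comm G g y \<in> N}" using CM_sym[OF N _ g AN] inC g by blast
  qed (use CM_right[OF N _ _ g] in blast)
  thus ?thesis by simp
qed

lemma A_eq:
  assumes ab: "gen2 a b"
  shows "AA = pcl G (comm G b a) B3"
proof -
  note d = gen2D[OF ab]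
  have c: "comm G b a \<in> AA" using cm1 d by simp
  have Nn: "pcl G (comm G b a) B3 \<lhd> G"
    using pcl_normal[OF c lcs_normal ch2] cm2[OF c] by blast
  have BN: "B3 \<subseteq> pcl G (comm G b a) B3" using pcl_incl[OF subset_trans[OF ch2 ch1]] by blast
  have cN: "comm G b a \<in> pcl G (comm G b a) B3" using pcl_gen1[OF inC[OF c] subgroup.one_closed[OF lcs_sg]] .
  have "lcs G (Suc 0) \<subseteq> pcl G (comm G b a) B3"
    by (rule lcs_min[OF normal_imp_subgroup[OF Nn]]) (use CMgen[OF ab Nn BN cN] in simp)
  moreover have "pcl G (comm G b a) B3 \<subseteq> AA" using pcl_in_sg[OF AAsg c ch2] .
  ultimately show ?thesis by simp
qed

lemma cardB3: "card B3 = p^4"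
proof -
  obtain a b where ab: "gen2 a b" using gen2_ex by blast
  note d = gen2D[OF ab]
  have c: "comm G b a \<in> AA" using cm1 d by simp
  have fB3: "finite B3" using fin_sub[OF lcs_sub] .
  have "card (pcl G (comm G b a) B3) = p^5" using cardA A_eq[OF ab] by simp
  hence "p^5 \<le> p * card B3"
    using pcl_card[OF inC[OF c] Aexp[OF c] fB3 p0] by simp
  hence lo: "p^4 \<le> card B3" using e45 p0 by (metis mult_le_cancel1)
  have "B3 \<noteq> AA" using lcs_ne[of 1] by (simp add: numeral_2_eq_2)
  hence "p * card B3 \<le> p^5" using sg_strict[OF lcs_sg lcs_sg ch2] cardA by simp
  hence "card B3 \<le> p^4" using e45 p0 by (metis mult_le_cancel1)
  thus ?thesis using lo by simp
qed

end


context P7 begin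

lemma lcs_gen2: "gen2 a b \<Longrightarrow> B3 = sprod G (Cm G AA a) (Cm G AA b)"
  using lcs_gen[of a b 1] by (simp add: numeral_2_eq_2)
lemma lcs_gen3: "gen2 a b \<Longrightarrow> B4 = sprod G (Cm G B3 a) (Cm G B3 b)"
  using lcs_gen[of a b 2] by (simp add: numeral_3_eq_3)
lemma lcs_gen4: "gen2 a b \<Longrightarrow> B5 = sprod G (Cm G B4 a) (Cm G B4 b)"
  using lcs_gen[of a b 3] by (simp add: eval_nat_numeral)
lemma lcs_gen5: "gen2 a b \<Longrightarrow> {\<one>} = sprod G (Cm G B5 a) (Cm G B5 b)"
  using lcs_gen[of a b 4] l5 by (simp add: eval_nat_numeral)

lemma B3A: "B3 \<subseteq> AA" using ch2 .
lemma B4A: "B4 \<subseteq> AA" using ch2 ch3 by blast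
lemma B5A: "B5 \<subseteq> AA" using ch2 ch3 ch4 by blast

lemma H1:
  assumes K: "subgroup K G" and t: "t \<in> AA" and MA: "M \<subseteq> AA" and g: "g \<in> carrier G"
    and ct: "comm G t g \<in> K" and cm: "\<And>m. m \<in> M \<Longrightarrow> comm G m g \<in> K" and y: "y \<in> pcl G t M"
  shows "comm G y g \<in> K"
proof -
  obtain k m where m: "m \<in> M" and ye: "y = t [^] (k::nat) \<otimes> m" using y by (rule pclE)
  have "comm G y g = (comm G t g) [^] k \<otimes> comm G m g" unfolding ye using cm_elem[OF t _ g] m MA by blast
  thus ?thesis using subgroup.m_closed[OF K sg_pow[OF K ct] cm[OF m]] by simp
qed

lemma H2:
  assumes ab: "gen2 a b" and n: "1 \<le> n" and K: "subgroup K G"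
    and c: "\<And>y. y \<in> lcs G n \<Longrightarrow> comm G y a \<in> K \<and> comm G y b \<in> K"
  shows "lcs G (Suc n) \<subseteq> K"
proof -
  have "Cm G (lcs G n) a \<subseteq> K" "Cm G (lcs G n) b \<subseteq> K" using c by (auto simp: Cm_def)
  thus ?thesis using lcs_gen[OF ab n] sprod_in_sg[OF K] by simp
qed

lemma F1:
  assumes ab: "gen2 a b"
  shows "B3 \<subseteq> pcl G (comm G (comm G b a) a) (pcl G (comm G (comm G b a) b) B4)"
proof
  note d = gen2D[OF ab]
  define c where "c = comm G b a"
  have c: "c \<in> AA" unfolding c_def using cm1 d by simp
  have u: "comm G c a \<in> AA" "comm G c b \<in> AA" using cm2[OF c] d B3A by auto
  fix y assume "y \<in> B3"
  hence "y \<in> sprod G (Cm G AA a) (Cm G AA b)" using lcs_gen2[OF ab] by simp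
  then obtain y1 y2 where y1: "y1 \<in> Cm G AA a" and y2: "y2 \<in> Cm G AA b" and ye: "y = y1 \<otimes> y2"
    by (rule sprodE)
  obtain x1 where x1: "x1 \<in> AA" "y1 = comm G x1 a" using y1 by (rule CmE)
  obtain x2 where x2: "x2 \<in> AA" "y2 = comm G x2 b" using y2 by (rule CmE)
  have "x1 \<in> pcl G c B3" using A_eq[OF ab] x1 c_def by simp
  then obtain i e1 where e1: "e1 \<in> B3" "x1 = c [^] (i::nat) \<otimes> e1" by (rule pclE)
  have "x2 \<in> pcl G c B3" using A_eq[OF ab] x2 c_def by simp
  then obtain j e2 where e2: "e2 \<in> B3" "x2 = c [^] (j::nat) \<otimes> e2" by (rule pclE)
  have f1: "comm G e1 a \<in> B4" using cm3 e1 d by simp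
  have f2: "comm G e2 b \<in> B4" using cm3 e2 d by simp
  have y1e: "y1 = (comm G c a) [^] i \<otimes> comm G e1 a" using x1 e1 cm_elem[OF c _ d(1)] B3A by blast
  have y2e: "y2 = (comm G c b) [^] j \<otimes> comm G e2 b" using x2 e2 cm_elem[OF c _ d(2)] B3A by blast
  have fA: "comm G e1 a \<in> AA" "comm G e2 b \<in> AA" using f1 f2 B4A by auto
  have "y = (comm G c a) [^] i \<otimes> ((comm G c b) [^] j \<otimes> (comm G e1 a \<otimes> comm G e2 b))"
    unfolding ye y1e y2e using AAlc[OF fA(1) AAp[OF u(2)] inC[OF fA(2)]] u fA inC
    by (simp add: m_assoc)
  moreover have "comm G e1 a \<otimes> comm G e2 b \<in> B4" using subgroup.m_closed[OF lcs_sg f1 f2] .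
  ultimately show "y \<in> pcl G (comm G (comm G b a) a) (pcl G (comm G (comm G b a) b) B4)"
    unfolding c_def using pclI[OF pclI] by metis
qed

lemma pcl_carrier: "t \<in> carrier G \<Longrightarrow> N \<subseteq> carrier G \<Longrightarrow> pcl G t N \<subseteq> carrier G"
  by (auto elim!: pclE)

lemma cardB4_lo: "p^2 \<le> card B4"
proof -
  obtain a b where ab: "gen2 a b" using gen2_ex by blast
  note d = gen2D[OF ab]
  define c where "c = comm G b a"
  have c: "c \<in> AA" unfolding c_def using cm1 d by simp
  have u: "comm G c a \<in> AA" "comm G c b \<in> AA" using cm2[OF c] d B3A by auto
  have fB4: "finite B4" using fin_sub[OF lcs_sub] .
  have sub1: "pcl G (comm G c b) B4 \<subseteq> carrier G" using pcl_carrier[OF inC[OF u(2)] lcs_sub] .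
  have sub2: "pcl G (comm G c a) (pcl G (comm G c b) B4) \<subseteq> carrier G"
    using pcl_carrier[OF inC[OF u(1)] sub1] .
  have "card B3 \<le> card (pcl G (comm G c a) (pcl G (comm G c b) B4))"
    using card_mono[OF fin_sub[OF sub2] F1[OF ab, folded c_def]] by simp
  also have "\<dots> \<le> p * card (pcl G (comm G c b) B4)"
    using pcl_card[OF inC[OF u(1)] Aexp[OF u(1)] fin_sub[OF sub1] p0] .
  also have "\<dots> \<le> p * (p * card B4)"
    using pcl_card[OF inC[OF u(2)] Aexp[OF u(2)] fB4 p0] by simp
  finally have "p * p^3 \<le> p * (p * card B4)" using cardB3 e34 by simp
  hence "p^3 \<le> p * card B4" using p0 by (metis mult_le_cancel1)
  hence "p * p^2 \<le> p * card B4" using e23 by simp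
  thus ?thesis using p0 by (metis mult_le_cancel1)
qed

lemma Hg:
  assumes XXe: "XX = sprod G (Cm G YY a) (Cm G YY b)" and K: "subgroup K G"
    and c: "\<And>y. y \<in> YY \<Longrightarrow> comm G y a \<in> K \<and> comm G y b \<in> K"
  shows "XX \<subseteq> K"
proof -
  have "Cm G YY a \<subseteq> K" "Cm G YY b \<subseteq> K" using c by (auto simp: Cm_def)
  thus ?thesis using XXe sprod_in_sg[OF K] by simp
qed

lemma one_sg: "subgroup {\<one>} G" using normal_imp_subgroup[OF one_is_normal] .

lemma pcl_card1: "t \<in> AA \<Longrightarrow> card (pcl G t {\<one>}) \<le> p"
  using pcl_card[OF inC Aexp, of t "{\<one>}"] p0 by simp

lemma pcl_card5: "t \<in> AA \<Longrightarrow> card (pcl G t B5) \<le> p * card B5"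
  using pcl_card[OF inC Aexp, of t B5] p0 fin_sub[OF lcs_sub] by simp

lemma K8core:
  assumes c3: "card B4 = p^3" shows False
proof -
  obtain a b where ab: "gen2 a b" using gen2_ex by blast
  note d = gen2D[OF ab]
  define c where "c = comm G b a"
  have c: "c \<in> AA" unfolding c_def using cm1 d by simp
  define u where "u = comm G c a"
  define v where "v = comm G c b"
  have u3: "u \<in> B3" "v \<in> B3" using cm2[OF c] d unfolding u_def v_def by auto
  have uA: "u \<in> AA" "v \<in> AA" using u3 B3A by auto
  have F: "B3 \<subseteq> pcl G u (pcl G v B4)" using F1[OF ab, folded c_def, folded u_def v_def] .
  have swap: "comm G v a = comm G u b" unfolding u_def v_def using cm_swap[OF c d(2) d(1)] .
  have B5n: "B5 \<lhd> G" by (rule lcs_normal)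
  have one5: "\<one> \<in> B5" using subgroup.one_closed[OF lcs_sg] .
  have main: "\<exists>t\<in>AA. B4 \<subseteq> pcl G t B5 \<and> (\<exists>s\<in>AA. B5 \<subseteq> pcl G s {\<one>})"
  proof (cases "u \<in> B4")
    case True
    have Bv: "B3 \<subseteq> pcl G v B4"
    proof
      fix y assume "y \<in> B3"
      hence "y \<in> pcl G u (pcl G v B4)" using F by blast
      then obtain i z where z: "z \<in> pcl G v B4" "y = u [^] (i::nat) \<otimes> z" by (rule pclE)
      obtain j w where w: "w \<in> B4" "z = v [^] (j::nat) \<otimes> w" using z(1) by (rule pclE)
      have wA: "w \<in> AA" using w B4A by blast
      have "y = v [^] j \<otimes> (u [^] i \<otimes> w)"
        using z w AAlc[OF AAp[OF uA(1)] AAp[OF uA(2)] inC[OF wA]] by simp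
      moreover have "u [^] i \<otimes> w \<in> B4" using subgroup.m_closed[OF lcs_sg sg_pow[OF lcs_sg True] w(1)] .
      ultimately show "y \<in> pcl G v B4" using pclI by simp
    qed
    define v' where "v' = comm G v b"
    have v'A: "v' \<in> AA" unfolding v'_def using cm2[OF uA(2) d(2)] B3A by blast
    have cva: "comm G v a \<in> B5" using swap cm4[OF True d(2)] by simp
    have K1: "subgroup (pcl G v' B5) G" using pcl_sg[OF finG B5n inC[OF v'A]] .
    have B5K1: "B5 \<subseteq> pcl G v' B5" using pcl_incl[OF lcs_sub] by blast
    have v'K1: "v' \<in> pcl G v' B5" using pcl_gen1[OF inC[OF v'A] one5] .
    have S4: "B4 \<subseteq> pcl G v' B5"
    proof (rule Hg[OF lcs_gen3[OF ab] K1])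
      fix y assume "y \<in> B3"
      hence y: "y \<in> pcl G v B4" using Bv by blast
      have 1: "comm G y a \<in> pcl G v' B5"
        by (rule H1[OF K1 uA(2) B4A d(1) _ _ y]) (use cva B5K1 cm4 d in blast)+
      have 2: "comm G y b \<in> pcl G v' B5"
        by (rule H1[OF K1 uA(2) B4A d(2) _ _ y]) (use v'K1 v'_def B5K1 cm4 d in blast)+
      show "comm G y a \<in> pcl G v' B5 \<and> comm G y b \<in> pcl G v' B5" using 1 2 by simp
    qed
    define s where "s = comm G v' b"
    have sA: "s \<in> AA" unfolding s_def using cm1 inC[OF v'A] d by simp
    have K2: "subgroup (pcl G s {\<one>}) G" using pcl_sg[OF finG one_is_normal inC[OF sA]] .
    have oneK2: "\<one> \<in> pcl G s {\<one>}" using subgroup.one_closed[OF K2] .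
    have sK2: "s \<in> pcl G s {\<one>}" using pcl_gen1[OF inC[OF sA]] by simp
    have cv'a: "comm G v' a = \<one>"
      unfolding v'_def using cm_swap[OF uA(2) d(2) d(1)] cm5[OF cva d(2)] by simp
    have S5: "B5 \<subseteq> pcl G s {\<one>}"
    proof (rule Hg[OF lcs_gen4[OF ab] K2])
      fix y assume "y \<in> B4"
      hence y: "y \<in> pcl G v' B5" using S4 by blast
      have 1: "comm G y a \<in> pcl G s {\<one>}"
        by (rule H1[OF K2 v'A B5A d(1) _ _ y]) (use cv'a oneK2 cm5 d in auto)
      have 2: "comm G y b \<in> pcl G s {\<one>}"
        by (rule H1[OF K2 v'A B5A d(2) _ _ y]) (use sK2 s_def oneK2 cm5 d in auto)
      show "comm G y a \<in> pcl G s {\<one>} \<and> comm G y b \<in> pcl G s {\<one>}" using 1 2 by simp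
    qed
    show ?thesis using v'A S4 sA S5 by blast
  next
    case False
    have Su: "subgroup (pcl G u B4) G" using pcl_sg[OF finG lcs_normal inC[OF uA(1)]] .
    have sub: "pcl G u B4 \<subseteq> B3" using pcl_in_sg[OF lcs_sg u3(1) ch3] .
    have B4u: "B4 \<subseteq> pcl G u B4" using pcl_incl[OF lcs_sub] by blast
    have "u \<in> pcl G u B4" using pcl_gen1[OF inC[OF uA(1)] subgroup.one_closed[OF lcs_sg]] .
    hence "B4 \<noteq> pcl G u B4" using False by blast
    hence "p * card B4 \<le> card (pcl G u B4)" using sg_strict[OF lcs_sg Su B4u] by simp
    hence "card B3 \<le> card (pcl G u B4)" using c3 cardB3 e34 by simp
    hence eqB3: "pcl G u B4 = B3" using sg_card_eq[OF sub lcs_sub] by simp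
    have "v \<in> pcl G u B4" using eqB3 u3 by simp
    then obtain k e where e: "e \<in> B4" "v = u [^] (k::nat) \<otimes> e" by (rule pclE)
    have eA: "e \<in> AA" using e B4A by blast
    define u' where "u' = comm G u a"
    have u'A: "u' \<in> AA" unfolding u'_def using cm2[OF uA(1) d(1)] B3A by blast
    have cea: "comm G e a \<in> B5" using cm4[OF e(1) d(1)] .
    have cub: "comm G u b = u' [^] k \<otimes> comm G e a"
      using swap[symmetric] e(2) cm_elem[OF uA(1) eA d(1)] u'_def by simp
    have K1: "subgroup (pcl G u' B5) G" using pcl_sg[OF finG B5n inC[OF u'A]] .
    have B5K1: "B5 \<subseteq> pcl G u' B5" using pcl_incl[OF lcs_sub] by blast
    have u'K1: "u' \<in> pcl G u' B5" using pcl_gen1[OF inC[OF u'A] one5] .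
    have cubK: "comm G u b \<in> pcl G u' B5" using cub pclI[OF cea] by simp
    have S4: "B4 \<subseteq> pcl G u' B5"
    proof (rule Hg[OF lcs_gen3[OF ab] K1])
      fix y assume "y \<in> B3"
      hence y: "y \<in> pcl G u B4" using eqB3 by simp
      have 1: "comm G y a \<in> pcl G u' B5"
        by (rule H1[OF K1 uA(1) B4A d(1) _ _ y]) (use u'K1 u'_def B5K1 cm4 d in blast)+
      have 2: "comm G y b \<in> pcl G u' B5"
        by (rule H1[OF K1 uA(1) B4A d(2) _ _ y]) (use cubK B5K1 cm4 d in blast)+
      show "comm G y a \<in> pcl G u' B5 \<and> comm G y b \<in> pcl G u' B5" using 1 2 by simp
    qed
    define s where "s = comm G u' a"
    have sA: "s \<in> AA" unfolding s_def using cm1 inC[OF u'A] d by simp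
    have K2: "subgroup (pcl G s {\<one>}) G" using pcl_sg[OF finG one_is_normal inC[OF sA]] .
    have oneK2: "\<one> \<in> pcl G s {\<one>}" using subgroup.one_closed[OF K2] .
    have sK2: "s \<in> pcl G s {\<one>}" using pcl_gen1[OF inC[OF sA]] by simp
    have ceaA: "comm G e a \<in> AA" using cea B5A by blast
    have "comm G u' b = comm G (comm G u b) a"
      unfolding u'_def using cm_swap[OF uA(1) d(1) d(2)] .
    also have "\<dots> = s [^] k \<otimes> comm G (comm G e a) a"
      using cub cm_elem[OF u'A ceaA d(1)] s_def by simp
    also have "\<dots> = s [^] k" using cm5[OF cea d(1)] inC[OF sA] by simp
    finally have cu'b: "comm G u' b = s [^] k" .
    have skK2: "s [^] k \<in> pcl G s {\<one>}" using pcl_gen[OF inC[OF sA]] by simp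
    have S5: "B5 \<subseteq> pcl G s {\<one>}"
    proof (rule Hg[OF lcs_gen4[OF ab] K2])
      fix y assume "y \<in> B4"
      hence y: "y \<in> pcl G u' B5" using S4 by blast
      have 1: "comm G y a \<in> pcl G s {\<one>}"
        by (rule H1[OF K2 u'A B5A d(1) _ _ y]) (use sK2 s_def oneK2 cm5 d in auto)
      have 2: "comm G y b \<in> pcl G s {\<one>}"
        by (rule H1[OF K2 u'A B5A d(2) _ _ y]) (use skK2 cu'b oneK2 cm5 d in auto)
      show "comm G y a \<in> pcl G s {\<one>} \<and> comm G y b \<in> pcl G s {\<one>}" using 1 2 by simp
    qed
    show ?thesis using u'A S4 sA S5 by blast
  qed
  then obtain t s where t: "t \<in> AA" "B4 \<subseteq> pcl G t B5" and s: "s \<in> AA" "B5 \<subseteq> pcl G s {\<one>}" by blast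
  have "card B4 \<le> card (pcl G t B5)"
    using card_mono[OF fin_sub[OF pcl_carrier[OF inC[OF t(1)] lcs_sub]] t(2)] .
  also have "\<dots> \<le> p * card B5" using pcl_card5[OF t(1)] .
  also have "card B5 \<le> card (pcl G s {\<one>})"
    using card_mono[OF fin_sub[OF pcl_carrier[OF inC[OF s(1)]]] s(2)] by simp
  also have "\<dots> \<le> p" using pcl_card1[OF s(1)] .
  finally have "p^3 \<le> p * p" using c3 by simp
  thus False using p1 by (simp add: power3_eq_cube)
qed

lemma cardB4: "card B4 = p^2"
proof -
  have "B4 \<noteq> B3" using lcs_ne[of 2] by (simp add: numeral_3_eq_3 numeral_2_eq_2)
  hence "p * card B4 \<le> p^4" using sg_strict[OF lcs_sg lcs_sg ch3] cardB3 by simp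
  hence up: "card B4 \<le> p^3" using e34 p0 by (metis mult_le_cancel1)
  obtain i where i: "card B4 = p^i" using card_sg[OF lcs_sg] by blast
  have "p^2 \<le> p^i" using cardB4_lo i by simp
  hence "2 \<le> i" using p1 by simp
  moreover have "i \<le> 3" using up i p1 by simp
  moreover have "i \<noteq> 3" using K8core i by blast
  ultimately have "i = 2" by simp
  thus ?thesis using i by simp
qed

lemma cardB5: "card B5 = p"
proof -
  have "B5 \<noteq> B4" using lcs_ne[of 3] by (simp add: eval_nat_numeral)
  hence "p * card B5 \<le> p^2" using sg_strict[OF lcs_sg lcs_sg ch4] cardB4 by simp
  hence up: "card B5 \<le> p" using e12 p0 by (metis mult_le_cancel1)
  have "{\<one>} \<subseteq> B5" using subgroup.one_closed[OF lcs_sg] by simp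
  hence "p * card {\<one>} \<le> card B5" using sg_strict[OF one_sg lcs_sg] l4 by metis
  thus ?thesis using up by simp
qed

end


context P7 begin

lemma card_L: "t \<in> AA \<Longrightarrow> card (pcl G t B4) \<le> p^3"
  using pcl_card[OF inC Aexp, of t B4] p0 fin_sub[OF lcs_sub] cardB4 e23 by simp

lemma pcl_pow_one: "t \<in> AA \<Longrightarrow> p dvd k \<Longrightarrow> t [^] k = \<one>"
proof -
  assume t: "t \<in> AA" and "p dvd k"
  then obtain k' where "k = p * k'" by blast
  thus "t [^] k = \<one>" using Aexp[OF t] inC[OF t] by (simp add: nat_pow_pow[symmetric])
qed

lemma IND:
  assumes ab: "gen2 a b" and x: "(comm G (comm G b a) a) [^] (i::nat) \<otimes> (comm G (comm G b a) b) [^] (j::nat) \<in> B4"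
  shows "p dvd i \<and> p dvd j"
proof -
  note d = gen2D[OF ab]
  define c where "c = comm G b a"
  have c: "c \<in> AA" unfolding c_def using cm1 d by simp
  define u where "u = comm G c a"
  define v where "v = comm G c b"
  have u3: "u \<in> B3" "v \<in> B3" using cm2[OF c] d unfolding u_def v_def by auto
  have uA: "u \<in> AA" "v \<in> AA" using u3 B3A by auto
  have F: "B3 \<subseteq> pcl G u (pcl G v B4)" using F1[OF ab, folded c_def, folded u_def v_def] .
  have x': "u [^] i \<otimes> v [^] j \<in> B4" using x unfolding u_def v_def c_def .
  have Lu: "subgroup (pcl G u B4) G" using pcl_sg[OF finG lcs_normal inC[OF uA(1)]] .
  have Lv: "subgroup (pcl G v B4) G" using pcl_sg[OF finG lcs_normal inC[OF uA(2)]] .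
  have B4u: "B4 \<subseteq> pcl G u B4" "B4 \<subseteq> pcl G v B4" using pcl_incl[OF lcs_sub] by blast+
  have uu: "u \<in> pcl G u B4" using pcl_gen1[OF inC[OF uA(1)] subgroup.one_closed[OF lcs_sg]] .
  have vv: "v \<in> pcl G v B4" using pcl_gen1[OF inC[OF uA(2)] subgroup.one_closed[OF lcs_sg]] .
  have small: "\<And>L. subgroup L G \<Longrightarrow> card L \<le> p^3 \<Longrightarrow> u \<in> L \<Longrightarrow> v \<in> L \<Longrightarrow> B4 \<subseteq> L \<Longrightarrow> False"
  proof -
    fix L assume L: "subgroup L G" "card L \<le> p^3" "u \<in> L" "v \<in> L" "B4 \<subseteq> L"
    have "pcl G v B4 \<subseteq> L" using pcl_in_sg[OF L(1) L(4) L(5)] .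
    hence "pcl G u (pcl G v B4) \<subseteq> L" using pcl_in_sg[OF L(1) L(3)] by blast
    hence "B3 \<subseteq> L" using F by blast
    hence "card B3 \<le> card L" using card_mono[OF fin_sub[OF subgroup.subset[OF L(1)]]] by blast
    hence "p^4 \<le> p^3" using cardB3 L(2) by simp
    thus False using p1 by simp
  qed
  have pj: "p dvd j"
  proof (rule ccontr)
    assume nd: "\<not> p dvd j"
    have "u [^] i \<in> pcl G u B4" using pcl_gen[OF inC[OF uA(1)] subgroup.one_closed[OF lcs_sg]] .
    hence "inv (u [^] i) \<otimes> (u [^] i \<otimes> v [^] j) \<in> pcl G u B4"
      using subgroup.m_closed[OF Lu subgroup.m_inv_closed[OF Lu] ] x' B4u by blast
    hence "v [^] j \<in> pcl G u B4" using inC uA by simp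
    moreover have "v [^] p \<in> pcl G u B4" using Aexp[OF uA(2)] subgroup.one_closed[OF Lu] by simp
    moreover have "j \<noteq> 0" using nd by (metis dvd_0_right)
    ultimately have "v \<in> pcl G u B4" using sg_coprime_pow[OF Lu inC[OF uA(2)] _ _ ndvd_coprime[OF nd]] by blast
    thus False using small[OF Lu card_L[OF uA(1)] uu _ B4u(1)] by blast
  qed
  hence "v [^] j = \<one>" using pcl_pow_one[OF uA(2)] by blast
  hence ui: "u [^] i \<in> B4" using x' inC[OF uA(1)] by simp
  have pi: "p dvd i"
  proof (rule ccontr)
    assume nd: "\<not> p dvd i"
    have "u [^] i \<in> pcl G v B4" using ui B4u by blast
    moreover have "u [^] p \<in> pcl G v B4" using Aexp[OF uA(1)] subgroup.one_closed[OF Lv] by simp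
    moreover have "i \<noteq> 0" using nd by (metis dvd_0_right)
    ultimately have "u \<in> pcl G v B4" using sg_coprime_pow[OF Lv inC[OF uA(1)] _ _ ndvd_coprime[OF nd]] by blast
    thus False using small[OF Lv card_L[OF uA(2)] _ vv B4u(2)] by blast
  qed
  show ?thesis using pi pj by simp
qed

lemma kerB4:
  assumes ab: "gen2 a b" and ne: "Cm G B4 a \<noteq> {\<one>}" and y: "y \<in> B4" and ya: "comm G y a = \<one>"
  shows "y \<in> B5"
proof (rule ccontr)
  assume ny: "y \<notin> B5"
  note d = gen2D[OF ab]
  have yA: "y \<in> AA" using y B4A by blast
  have S: "subgroup (pcl G y B5) G" using pcl_sg[OF finG lcs_normal inC[OF yA]] .
  have sub: "pcl G y B5 \<subseteq> B4" using pcl_in_sg[OF lcs_sg y ch4] .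
  have B5y: "B5 \<subseteq> pcl G y B5" using pcl_incl[OF lcs_sub] by blast
  have "y \<in> pcl G y B5" using pcl_gen1[OF inC[OF yA] subgroup.one_closed[OF lcs_sg]] .
  hence "B5 \<noteq> pcl G y B5" using ny by blast
  hence "p * card B5 \<le> card (pcl G y B5)" using sg_strict[OF lcs_sg S B5y] by simp
  hence "card B4 \<le> card (pcl G y B5)" using cardB4 cardB5 e12 by simp
  hence eq: "pcl G y B5 = B4" using sg_card_eq[OF sub lcs_sub] by simp
  have "Cm G B4 a \<subseteq> {\<one>}"
  proof
    fix z assume "z \<in> Cm G B4 a"
    then obtain w where w: "w \<in> B4" "z = comm G w a" by (rule CmE)
    have "comm G w a \<in> {\<one>}"
      by (rule H1[OF one_sg yA B5A d(1) _ _ w(1)[folded eq]]) (use ya cm5 d in auto)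
    thus "z \<in> {\<one>}" using w by simp
  qed
  moreover have "\<one> \<in> Cm G B4 a" using CmI[OF subgroup.one_closed[OF lcs_sg], of a 3] d by simp
  ultimately show False using ne by blast
qed

lemma Z5a:
  assumes ab: "gen2 a b" and ne: "Cm G B4 a \<noteq> {\<one>}"
  shows "\<exists>k l. (comm G (comm G b a) a) [^] (k::nat) \<otimes> (comm G (comm G b a) b) [^] (l::nat) \<notin> B4
     \<and> comm G ((comm G (comm G b a) a) [^] k \<otimes> (comm G (comm G b a) b) [^] l) a \<in> B5
     \<and> comm G ((comm G (comm G b a) a) [^] k \<otimes> (comm G (comm G b a) b) [^] l) b \<in> B5"
proof -
  note d = gen2D[OF ab]
  define c where "c = comm G b a"
  have c: "c \<in> AA" unfolding c_def using cm1 d by simp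
  define u where "u = comm G c a"
  define v where "v = comm G c b"
  have u3: "u \<in> B3" "v \<in> B3" using cm2[OF c] d unfolding u_def v_def by auto
  have uA: "u \<in> AA" "v \<in> AA" using u3 B3A by auto
  define ph where "ph = (\<lambda>y. comm G (comm G y a) a)"
  have phe: "\<And>s t k. s \<in> AA \<Longrightarrow> t \<in> AA \<Longrightarrow> ph (s [^] (k::nat) \<otimes> t) = ph s [^] k \<otimes> ph t"
  proof -
    fix s t k assume s: "s \<in> AA" and t: "t \<in> AA"
    have sa: "comm G s a \<in> AA" "comm G t a \<in> AA" using cm2[OF s d(1)] cm2[OF t d(1)] B3A by auto
    show "ph (s [^] (k::nat) \<otimes> t) = ph s [^] k \<otimes> ph t"
      unfolding ph_def using cm_elem[OF s t d(1)] cm_elem[OF sa d(1)] by simp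
  qed
  have ph5: "\<And>y. y \<in> B3 \<Longrightarrow> ph y \<in> B5" unfolding ph_def using cm3 cm4 d by blast
  have goal: "\<And>x. x \<in> B3 \<Longrightarrow> ph x = \<one> \<Longrightarrow> comm G x a \<in> B5 \<and> comm G x b \<in> B5"
  proof -
    fix x assume x: "x \<in> B3" and px: "ph x = \<one>"
    have xA: "x \<in> AA" using x B3A by blast
    have ya: "comm G x a \<in> B5" using kerB4[OF ab ne cm3[OF x d(1)]] px unfolding ph_def by simp
    have "comm G (comm G x b) a = comm G (comm G x a) b" using cm_swap[OF xA d(2) d(1)] .
    also have "\<dots> = \<one>" using cm5[OF ya d(2)] .
    finally have "comm G x b \<in> B5" using kerB4[OF ab ne cm3[OF x d(2)]] by simp
    thus "comm G x a \<in> B5 \<and> comm G x b \<in> B5" using ya by simp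
  qed
  have x3: "\<And>k l. u [^] (k::nat) \<otimes> v [^] (l::nat) \<in> B3"
    using subgroup.m_closed[OF lcs_sg sg_pow[OF lcs_sg u3(1)] sg_pow[OF lcs_sg u3(2)]] by blast
  show ?thesis
  proof (cases "ph u = \<one>")
    case True
    have e: "u [^] (1::nat) \<otimes> v [^] (0::nat) = u" using inC[OF uA(1)] by simp
    have "ph (u [^] (1::nat) \<otimes> v [^] (0::nat)) = \<one>" using True e by simp
    moreover have "u [^] (1::nat) \<otimes> v [^] (0::nat) \<notin> B4"
    proof
      assume "u [^] (1::nat) \<otimes> v [^] (0::nat) \<in> B4"
      hence "p dvd (1::nat)" using IND[OF ab] u_def v_def c_def by blast
      thus False using p1 by simp
    qed
    ultimately show ?thesis using goal[OF x3] u_def v_def c_def by blast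
  next
    case False
    have pu5: "ph u \<in> B5" using ph5[OF u3(1)] .
    have pv5: "ph v \<in> B5" using ph5[OF u3(2)] .
    have puA: "ph u \<in> AA" using pu5 B5A by blast
    have S: "subgroup (pcl G (ph u) {\<one>}) G" using pcl_sg[OF finG one_is_normal inC[OF puA]] .
    have sub: "pcl G (ph u) {\<one>} \<subseteq> B5" using pcl_in_sg[OF lcs_sg pu5] subgroup.one_closed[OF lcs_sg] by blast
    have "{\<one>} \<subseteq> pcl G (ph u) {\<one>}" using subgroup.one_closed[OF S] by blast
    moreover have "ph u \<in> pcl G (ph u) {\<one>}" using pcl_gen1[OF inC[OF puA]] by simp
    ultimately have "p * card {\<one>} \<le> card (pcl G (ph u) {\<one>})" using sg_strict[OF one_sg S] False by blast
    hence "card B5 \<le> card (pcl G (ph u) {\<one>})" using cardB5 by simp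
    hence eq: "pcl G (ph u) {\<one>} = B5" using sg_card_eq[OF sub lcs_sub] by simp
    obtain m where m: "ph v = ph u [^] (m::nat)"
      using pv5[folded eq] by (auto elim!: pclE simp: inC[OF puA])
    define k where "k = (p - 1) * m"
    have km: "k + m = p * m" unfolding k_def using p0 by (simp add: algebra_simps)
    have v1: "v [^] (1::nat) = v" using inC[OF uA(2)] by simp
    have "ph (u [^] k \<otimes> v [^] (1::nat)) = ph u [^] k \<otimes> ph v"
      unfolding v1 using phe[OF uA(1) uA(2)] .
    also have "\<dots> = ph u [^] (k + m)" unfolding m using inC[OF puA] by (simp add: nat_pow_mult)
    also have "\<dots> = (ph u [^] p) [^] m" unfolding km using inC[OF puA] by (simp add: nat_pow_pow)
    also have "\<dots> = \<one>" using Aexp[OF puA] by simp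
    finally have "ph (u [^] k \<otimes> v [^] (1::nat)) = \<one>" .
    moreover have "u [^] k \<otimes> v [^] (1::nat) \<notin> B4"
    proof
      assume "u [^] k \<otimes> v [^] (1::nat) \<in> B4"
      hence "p dvd (1::nat)" using IND[OF ab] u_def v_def c_def by blast
      thus False using p1 by simp
    qed
    ultimately show ?thesis using goal[OF x3] u_def v_def c_def by blast
  qed
qed

end


context P7 begin

definition Zs :: "'a set" where
  "Zs = {g \<in> carrier G. \<forall>h \<in> carrier G. comm G g h \<in> B5}"

lemma comm_inv_left:
  "g \<in> carrier G \<Longrightarrow> h \<in> carrier G \<Longrightarrow> comm G (inv g) h = g \<otimes> comm G h g \<otimes> inv g"
  by (simp add: comm_def m_assoc)

lemma Zs_sg: "subgroup Zs G"
proof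
  show "Zs \<subseteq> carrier G" unfolding Zs_def by blast
next
  fix x y assume x: "x \<in> Zs" and y: "y \<in> Zs"
  have xc: "x \<in> carrier G" and yc: "y \<in> carrier G" using x y unfolding Zs_def by auto
  have "\<And>h. h \<in> carrier G \<Longrightarrow> comm G (x \<otimes> y) h \<in> B5"
    using CM_left[OF lcs_normal xc yc] x y unfolding Zs_def by blast
  thus "x \<otimes> y \<in> Zs" unfolding Zs_def using xc yc by blast
next
  show "\<one> \<in> Zs" unfolding Zs_def using subgroup.one_closed[OF lcs_sg] by simp
next
  fix x assume x: "x \<in> Zs"
  have xc: "x \<in> carrier G" using x unfolding Zs_def by auto
  have "\<And>h. h \<in> carrier G \<Longrightarrow> comm G (inv x) h \<in> B5"
  proof -
    fix h assume h: "h \<in> carrier G"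
    have "comm G h x \<in> B5" using CM_sym[OF lcs_normal xc h] x h unfolding Zs_def by blast
    hence "x \<otimes> comm G h x \<otimes> inv x \<in> B5" using normal.inv_op_closed2[OF lcs_normal xc] by blast
    thus "comm G (inv x) h \<in> B5" using comm_inv_left[OF xc h] by simp
  qed
  thus "inv x \<in> Zs" unfolding Zs_def using xc by simp
qed

lemma notA:
  assumes g: "g \<in> carrier G" and c: "\<And>h. h \<in> carrier G \<Longrightarrow> comm G g h \<in> B3"
  shows "g \<in> AA"
proof (rule ccontr)
  assume gA: "g \<notin> AA"
  have "pcl G g AA \<noteq> carrier G" using notcyc[OF g gA] .
  moreover have "pcl G g AA \<subseteq> carrier G" using subgroup.subset[OF pclA_props(1)[OF g gA]] .
  ultimately obtain b where b: "b \<in> carrier G" "b \<notin> pcl G g AA" by blast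
  have ab: "gen2 g b" unfolding gen2_def using g gA b by blast
  have "comm G b g \<in> B3" using CM_sym[OF lcs_normal g b(1) c[OF b(1)]] .
  hence "pcl G (comm G b g) B3 \<subseteq> B3" using pcl_in_sg[OF lcs_sg _ subset_refl] by blast
  hence "AA \<subseteq> B3" using A_eq[OF ab] by simp
  hence "AA = B3" using ch2 by blast
  thus False using lcs_ne[of 1] by (simp add: numeral_2_eq_2)
qed

lemma Zs_char:
  assumes ab: "gen2 a b" and x: "x \<in> AA" and xa: "comm G x a \<in> B5" and xb: "comm G x b \<in> B5"
  shows "x \<in> Zs"
proof -
  note d = gen2D[OF ab]
  have "\<And>h. h \<in> carrier G \<Longrightarrow> h \<in> {h \<in> carrier G. comm G x h \<in> B5}"
  proof -
    fix h assume h: "h \<in> carrier G"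
    show "h \<in> {h \<in> carrier G. comm G x h \<in> B5}"
    proof (rule gen2_closure[OF ab _ _ _ _ h])
      show "a \<in> {h \<in> carrier G. comm G x h \<in> B5}" using d xa by simp
      show "b \<in> {h \<in> carrier G. comm G x h \<in> B5}" using d xb by simp
      show "AA \<subseteq> {h \<in> carrier G. comm G x h \<in> B5}"
        using cm_AA[OF x] inC subgroup.one_closed[OF lcs_sg] by auto
    qed (use CM_right[OF lcs_normal _ _ inC[OF x]] in blast)
  qed
  thus ?thesis unfolding Zs_def using inC[OF x] by blast
qed

lemma B5B3: "B5 \<subseteq> B3" using ch3 ch4 by blast

lemma Zs_A: "Zs \<subseteq> AA"
proof
  fix g assume "g \<in> Zs"
  hence g: "g \<in> carrier G" "\<And>h. h \<in> carrier G \<Longrightarrow> comm G g h \<in> B5" unfolding Zs_def by auto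
  show "g \<in> AA" using notA[OF g(1)] g(2) B5B3 by blast
qed

lemma B4_Zs: "B4 \<subseteq> Zs"
  unfolding Zs_def using cm4 lcs_carrier by blast

lemma pclAA:
  assumes x: "x \<in> AA" and nx: "x \<notin> B3"
  shows "pcl G x B3 = AA"
proof -
  have S: "subgroup (pcl G x B3) G" using pcl_sg[OF finG lcs_normal inC[OF x]] .
  have sub: "pcl G x B3 \<subseteq> AA" using pcl_in_sg[OF AAsg x ch2] .
  have B3x: "B3 \<subseteq> pcl G x B3" using pcl_incl[OF lcs_sub] by blast
  have "x \<in> pcl G x B3" using pcl_gen1[OF inC[OF x] subgroup.one_closed[OF lcs_sg]] .
  hence "B3 \<noteq> pcl G x B3" using nx by blast
  hence "p * card B3 \<le> card (pcl G x B3)" using sg_strict[OF lcs_sg S B3x] by simp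
  hence "card AA \<le> card (pcl G x B3)" using cardB3 cardA e45 by simp
  thus ?thesis using sg_card_eq[OF sub lcs_sub] by simp
qed

lemma Zs_B3: "Zs \<subseteq> B3"
proof
  fix x assume xZ: "x \<in> Zs"
  show "x \<in> B3"
  proof (rule ccontr)
    assume nx: "x \<notin> B3"
    have x: "x \<in> AA" using xZ Zs_A by blast
    have xc: "\<And>h. h \<in> carrier G \<Longrightarrow> comm G x h \<in> B5" using xZ unfolding Zs_def by auto
    obtain a b where ab: "gen2 a b" using gen2_ex by blast
    note d = gen2D[OF ab]
    have eq: "pcl G x B3 = AA" using pclAA[OF x nx] .
    have "B3 \<subseteq> B4"
    proof (rule Hg[OF lcs_gen2[OF ab] lcs_sg])
      fix y assume "y \<in> AA"
      hence y: "y \<in> pcl G x B3" using eq by simp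
      have 1: "comm G y a \<in> B4"
        by (rule H1[OF lcs_sg x B3A d(1) _ _ y]) (use xc d ch4 cm3 in blast)+
      have 2: "comm G y b \<in> B4"
        by (rule H1[OF lcs_sg x B3A d(2) _ _ y]) (use xc d ch4 cm3 in blast)+
      show "comm G y a \<in> B4 \<and> comm G y b \<in> B4" using 1 2 by simp
    qed
    hence "B3 = B4" using ch3 by blast
    thus False using lcs_ne[of 2] by (simp add: numeral_2_eq_2 numeral_3_eq_3)
  qed
qed

lemma Zs_ne_B3: "\<not> B3 \<subseteq> Zs"
proof
  assume B: "B3 \<subseteq> Zs"
  obtain a b where ab: "gen2 a b" using gen2_ex by blast
  note d = gen2D[OF ab]
  have "B4 \<subseteq> B5"
    by (rule Hg[OF lcs_gen3[OF ab] lcs_sg]) (use B d in \<open>auto simp: Zs_def\<close>)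
  hence "B4 = B5" using ch4 by blast
  thus False using lcs_ne[of 3] by (simp add: eval_nat_numeral)
qed

lemma Z5s: "\<exists>a b k l. gen2 a b
   \<and> (comm G (comm G b a) a) [^] (k::nat) \<otimes> (comm G (comm G b a) b) [^] (l::nat) \<notin> B4
   \<and> (comm G (comm G b a) a) [^] k \<otimes> (comm G (comm G b a) b) [^] l \<in> Zs"
proof -
  obtain a b where ab: "gen2 a b" using gen2_ex by blast
  note d = gen2D[OF ab]
  have XA: "\<And>a b k l. gen2 a b \<Longrightarrow> (comm G (comm G b a) a) [^] (k::nat) \<otimes> (comm G (comm G b a) b) [^] (l::nat) \<in> AA"
  proof -
    fix a b k l assume ab: "gen2 a b"
    note d = gen2D[OF ab]
    have c: "comm G b a \<in> AA" using cm1 d by simp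
    have "comm G (comm G b a) a \<in> AA" "comm G (comm G b a) b \<in> AA" using cm2[OF c] d B3A by auto
    thus "(comm G (comm G b a) a) [^] (k::nat) \<otimes> (comm G (comm G b a) b) [^] (l::nat) \<in> AA"
      using AAm AAp by blast
  qed
  show ?thesis
  proof (cases "Cm G B4 a = {\<one>}")
    case False
    obtain k l where kl: "(comm G (comm G b a) a) [^] (k::nat) \<otimes> (comm G (comm G b a) b) [^] (l::nat) \<notin> B4"
      "comm G ((comm G (comm G b a) a) [^] k \<otimes> (comm G (comm G b a) b) [^] l) a \<in> B5"
      "comm G ((comm G (comm G b a) a) [^] k \<otimes> (comm G (comm G b a) b) [^] l) b \<in> B5"
      using Z5a[OF ab False] by blast
    show ?thesis using kl Zs_char[OF ab XA[OF ab] kl(2) kl(3)] ab by blast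
  next
    case True
    have "Cm G B4 b \<noteq> {\<one>}"
    proof
      assume Tb: "Cm G B4 b = {\<one>}"
      have "B5 = sprod G {\<one>} {\<one>}" using lcs_gen4[OF ab] True Tb by simp
      hence "B5 \<subseteq> {\<one>}" by (auto elim!: sprodE)
      thus False using l4 subgroup.one_closed[OF lcs_sg, of 4] by blast
    qed
    have ba: "gen2 b a" using gen2_sym[OF ab] .
    obtain k l where kl: "(comm G (comm G a b) b) [^] (k::nat) \<otimes> (comm G (comm G a b) a) [^] (l::nat) \<notin> B4"
      "comm G ((comm G (comm G a b) b) [^] k \<otimes> (comm G (comm G a b) a) [^] l) b \<in> B5"
      "comm G ((comm G (comm G a b) b) [^] k \<otimes> (comm G (comm G a b) a) [^] l) a \<in> B5"
      using Z5a[OF ba \<open>Cm G B4 b \<noteq> {\<one>}\<close>] by blast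
    show ?thesis using kl Zs_char[OF ba XA[OF ba] kl(2) kl(3)] ba by blast
  qed
qed

lemma cardZs: "card Zs = p^3"
proof -
  obtain a b k l where ab: "gen2 a b"
    and X: "(comm G (comm G b a) a) [^] (k::nat) \<otimes> (comm G (comm G b a) b) [^] (l::nat) \<notin> B4"
      "(comm G (comm G b a) a) [^] k \<otimes> (comm G (comm G b a) b) [^] l \<in> Zs"
    using Z5s by blast
  have "B4 \<noteq> Zs" using X by blast
  hence "p * card B4 \<le> card Zs" using sg_strict[OF lcs_sg Zs_sg B4_Zs] by simp
  hence lo: "p^3 \<le> card Zs" using cardB4 e23 by simp
  have "Zs \<noteq> B3" using Zs_ne_B3 by blast
  hence "p * card Zs \<le> p^4" using sg_strict[OF Zs_sg lcs_sg Zs_B3] cardB3 by simp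
  hence "card Zs \<le> p^3" using e34 p0 by (metis mult_le_cancel1)
  thus ?thesis using lo by simp
qed

lemma cen_Zs: "center G \<subseteq> Zs"
proof
  fix z assume "z \<in> center G"
  hence z: "z \<in> carrier G" "\<And>g. g \<in> carrier G \<Longrightarrow> z \<otimes> g = g \<otimes> z" unfolding center_def by auto
  have "\<And>h. h \<in> carrier G \<Longrightarrow> comm G z h \<in> B5"
  proof -
    fix h assume h: "h \<in> carrier G"
    have "comm G z h = \<one>" using comm_one_iff[OF z(1) h] z(2)[OF h] by simp
    thus "comm G z h \<in> B5" using subgroup.one_closed[OF lcs_sg] by simp
  qed
  thus "z \<in> Zs" unfolding Zs_def using z by blast
qed

lemma B5_cen: "B5 \<subseteq> center G"
  unfolding center_def using cm5 lcs_carrier comm_one_iff by blast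

lemma cen_B4:
  assumes y: "y \<in> B4" and yc: "y \<in> center G"
  shows "y \<in> B5"
proof (rule ccontr)
  assume ny: "y \<notin> B5"
  obtain a b where ab: "gen2 a b" using gen2_ex by blast
  note d = gen2D[OF ab]
  have yA: "y \<in> AA" using y B4A by blast
  have ycm: "\<And>g. g \<in> carrier G \<Longrightarrow> comm G y g = \<one>"
    using yc comm_one_iff inC[OF yA] unfolding center_def by blast
  have S: "subgroup (pcl G y B5) G" using pcl_sg[OF finG lcs_normal inC[OF yA]] .
  have sub: "pcl G y B5 \<subseteq> B4" using pcl_in_sg[OF lcs_sg y ch4] .
  have B5y: "B5 \<subseteq> pcl G y B5" using pcl_incl[OF lcs_sub] by blast
  have "y \<in> pcl G y B5" using pcl_gen1[OF inC[OF yA] subgroup.one_closed[OF lcs_sg]] .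
  hence "B5 \<noteq> pcl G y B5" using ny by blast
  hence "p * card B5 \<le> card (pcl G y B5)" using sg_strict[OF lcs_sg S B5y] by simp
  hence "card B4 \<le> card (pcl G y B5)" using cardB4 cardB5 e12 by simp
  hence eq: "pcl G y B5 = B4" using sg_card_eq[OF sub lcs_sub] by simp
  have "B5 \<subseteq> {\<one>}"
  proof (rule Hg[OF lcs_gen4[OF ab] one_sg])
    fix w assume "w \<in> B4"
    hence w: "w \<in> pcl G y B5" using eq by simp
    have 1: "comm G w a \<in> {\<one>}"
      by (rule H1[OF one_sg yA B5A d(1) _ _ w]) (use ycm cm5 d in auto)
    have 2: "comm G w b \<in> {\<one>}"
      by (rule H1[OF one_sg yA B5A d(2) _ _ w]) (use ycm cm5 d in auto)
    show "comm G w a \<in> {\<one>} \<and> comm G w b \<in> {\<one>}" using 1 2 by simp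
  qed
  thus False using l4 subgroup.one_closed[OF lcs_sg, of 4] by blast
qed

lemma center2_eq: "center2 G = Zs"
proof
  show "Zs \<subseteq> center2 G" unfolding center2_def Zs_def using B5_cen by blast
next
  show "center2 G \<subseteq> Zs"
  proof
    fix z assume "z \<in> center2 G"
    hence z: "z \<in> carrier G" and zc: "\<And>g. g \<in> carrier G \<Longrightarrow> comm G z g \<in> center G"
      unfolding center2_def by auto
    have zc3: "\<And>g. g \<in> carrier G \<Longrightarrow> comm G z g \<in> B3" using zc cen_Zs Zs_B3 by blast
    have zA: "z \<in> AA" using notA[OF z zc3] .
    obtain a b where ab: "gen2 a b" using gen2_ex by blast
    note d = gen2D[OF ab]
    have z3: "z \<in> B3"
    proof (rule ccontr)
      assume nz: "z \<notin> B3"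
      have eq: "pcl G z B3 = AA" using pclAA[OF zA nz] .
      have "B3 \<subseteq> Zs"
      proof (rule Hg[OF lcs_gen2[OF ab] Zs_sg])
        fix y assume "y \<in> AA"
        hence y: "y \<in> pcl G z B3" using eq by simp
        have 1: "comm G y a \<in> Zs"
          by (rule H1[OF Zs_sg zA B3A d(1) _ _ y]) (use zc cen_Zs d cm3 B4_Zs in blast)+
        have 2: "comm G y b \<in> Zs"
          by (rule H1[OF Zs_sg zA B3A d(2) _ _ y]) (use zc cen_Zs d cm3 B4_Zs in blast)+
        show "comm G y a \<in> Zs \<and> comm G y b \<in> Zs" using 1 2 by simp
      qed
      thus False using Zs_ne_B3 by blast
    qed
    have "comm G z a \<in> B5" using cen_B4[OF cm3[OF z3 d(1)] zc[OF d(1)]] .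
    moreover have "comm G z b \<in> B5" using cen_B4[OF cm3[OF z3 d(2)] zc[OF d(2)]] .
    ultimately show "z \<in> Zs" using Zs_char[OF ab zA] by blast
  qed
qed

end


context P7 begin

lemma B5_normal: "B5 \<lhd> G" by (rule lcs_normal)

lemma coset_comm_iff:
  assumes g: "g \<in> carrier G" and h: "h \<in> carrier G"
  shows "B5 #> (g \<otimes> h) = B5 #> (h \<otimes> g) \<longleftrightarrow> comm G g h \<in> B5"
proof
  have sg: "subgroup B5 G" by (rule lcs_sg)
  assume eq: "B5 #> (g \<otimes> h) = B5 #> (h \<otimes> g)"
  have "g \<otimes> h \<in> B5 #> (h \<otimes> g)" using rcos_self[OF _ sg, of "g \<otimes> h"] g h eq by simp
  hence "(g \<otimes> h) \<otimes> inv (h \<otimes> g) \<in> B5"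
    using subgroup.rcos_module_imp[OF sg is_group, of "h \<otimes> g"] g h by simp
  hence "inv (h \<otimes> g) \<otimes> ((g \<otimes> h) \<otimes> inv (h \<otimes> g)) \<otimes> (h \<otimes> g) \<in> B5"
    using normal.inv_op_closed1[OF B5_normal, of "h \<otimes> g"] g h by simp
  moreover have "inv (h \<otimes> g) \<otimes> ((g \<otimes> h) \<otimes> inv (h \<otimes> g)) \<otimes> (h \<otimes> g) = comm G g h"
    using g h by (simp add: comm_def m_assoc inv_mult_group)
  ultimately show "comm G g h \<in> B5" by simp
next
  have sg: "subgroup B5 G" by (rule lcs_sg)
  assume c: "comm G g h \<in> B5"
  have "(h \<otimes> g) \<otimes> comm G g h \<otimes> inv (h \<otimes> g) \<in> B5"
    using normal.inv_op_closed2[OF B5_normal _ c, of "h \<otimes> g"] g h by simp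
  moreover have "(h \<otimes> g) \<otimes> comm G g h \<otimes> inv (h \<otimes> g) = (g \<otimes> h) \<otimes> inv (h \<otimes> g)"
    using g h by (simp add: comm_def m_assoc inv_mult_group)
  ultimately have "(g \<otimes> h) \<otimes> inv (h \<otimes> g) \<in> B5" by simp
  hence "g \<otimes> h \<in> B5 #> (h \<otimes> g)"
    using subgroup.rcos_module_rev[OF sg is_group, of "h \<otimes> g" "g \<otimes> h"] g h by simp
  thus "B5 #> (g \<otimes> h) = B5 #> (h \<otimes> g)"
    using repr_independence[of "g \<otimes> h" B5 "h \<otimes> g"] sg g h by simp
qed

lemma center_quot: "center (G Mod B5) = (\<lambda>a. B5 #> a) ` Zs"
proof
  show "center (G Mod B5) \<subseteq> (\<lambda>a. B5 #> a) ` Zs"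
  proof
    fix XX assume XX: "XX \<in> center (G Mod B5)"
    hence Xr: "XX \<in> rcosets B5" and XY: "\<And>YY. YY \<in> rcosets B5 \<Longrightarrow> XX <#> YY = YY <#> XX"
      unfolding center_def FactGroup_def by auto
    obtain g where g: "g \<in> carrier G" and Xe: "XX = B5 #> g" using Xr unfolding RCOSETS_def by blast
    have "\<And>h. h \<in> carrier G \<Longrightarrow> comm G g h \<in> B5"
    proof -
      fix h assume h: "h \<in> carrier G"
      have "B5 #> h \<in> rcosets B5" using rcosetsI[OF lcs_sub h] .
      hence "(B5 #> g) <#> (B5 #> h) = (B5 #> h) <#> (B5 #> g)" using XY Xe by simp
      hence "B5 #> (g \<otimes> h) = B5 #> (h \<otimes> g)" using normal.rcos_sum[OF B5_normal] g h by simp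
      thus "comm G g h \<in> B5" using coset_comm_iff[OF g h] by simp
    qed
    hence "g \<in> Zs" unfolding Zs_def using g by blast
    thus "XX \<in> (\<lambda>a. B5 #> a) ` Zs" using Xe by blast
  qed
next
  show "(\<lambda>a. B5 #> a) ` Zs \<subseteq> center (G Mod B5)"
  proof
    fix XX assume "XX \<in> (\<lambda>a. B5 #> a) ` Zs"
    then obtain g where gZ: "g \<in> Zs" and Xe: "XX = B5 #> g" by blast
    have g: "g \<in> carrier G" using gZ unfolding Zs_def by auto
    have Xr: "XX \<in> rcosets B5" using rcosetsI[OF lcs_sub g] Xe by simp
    have "\<And>YY. YY \<in> rcosets B5 \<Longrightarrow> XX <#> YY = YY <#> XX"
    proof -
      fix YY assume "YY \<in> rcosets B5"
      then obtain h where h: "h \<in> carrier G" and Ye: "YY = B5 #> h" unfolding RCOSETS_def by blast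
      have "comm G g h \<in> B5" using gZ h unfolding Zs_def by auto
      hence "B5 #> (g \<otimes> h) = B5 #> (h \<otimes> g)" using coset_comm_iff[OF g h] by simp
      thus "XX <#> YY = YY <#> XX" using normal.rcos_sum[OF B5_normal] g h Xe Ye by simp
    qed
    thus "XX \<in> center (G Mod B5)" unfolding center_def FactGroup_def using Xr by auto
  qed
qed

lemma card_center_quot: "card (center (G Mod B5)) = p^2"
proof -
  interpret Z: group "G\<lparr>carrier := Zs\<rparr>" using subgroup.subgroup_is_group[OF Zs_sg is_group] .
  have sg: "subgroup B5 (G\<lparr>carrier := Zs\<rparr>)" using subgroup_incl[OF lcs_sg Zs_sg] ch4 B4_Zs by blast
  have "card (rcosets\<^bsub>G\<lparr>carrier := Zs\<rparr>\<^esub> B5) * card B5 = order (G\<lparr>carrier := Zs\<rparr>)"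
    using Z.lagrange[OF sg] .
  moreover have "rcosets\<^bsub>G\<lparr>carrier := Zs\<rparr>\<^esub> B5 = (\<lambda>a. B5 #> a) ` Zs"
    by (auto simp: RCOSETS_def r_coset_def)
  ultimately have "card ((\<lambda>a. B5 #> a) ` Zs) * p = p^3"
    using cardZs cardB5 by (simp add: order_def)
  hence "card ((\<lambda>a. B5 #> a) ` Zs) * p = p^2 * p" by (simp add: power3_eq_cube power2_eq_square)
  hence "card ((\<lambda>a. B5 #> a) ` Zs) = p^2" using p0 by simp
  thus ?thesis using center_quot by simp
qed

end


context P7 begin

lemma LIN1:
  assumes y: "y \<in> carrier G" and g: "g \<in> carrier G" and h: "h \<in> carrier G"
  shows "comm G y (g \<otimes> h) = comm G y h \<otimes> (comm G y g \<otimes> comm G (comm G y g) h)"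
  using comm_mult_right[OF y g h] y g h by (simp add: comm_def m_assoc)

lemma lcsA: "1 \<le> n \<Longrightarrow> lcs G n \<subseteq> AA" using lcs_mono by blast

lemma lcs_Suc_A: "lcs G (Suc n) \<subseteq> AA" using lcs_mono[of 1 "Suc n"] by simp

lemma LINpow:
  assumes y: "y \<in> lcs G n" and n: "1 \<le> n" and g: "g \<in> carrier G"
  shows "\<exists>w \<in> lcs G (Suc (Suc n)). comm G y (g [^] (k::nat)) = (comm G y g) [^] k \<otimes> w"
proof (induct k)
  case 0 thus ?case using subgroup.one_closed[OF lcs_sg] lcs_carrier[OF y] by force
next
  case (Suc k)
  then obtain w where w: "w \<in> lcs G (Suc (Suc n))" and e: "comm G y (g [^] k) = (comm G y g) [^] k \<otimes> w" by blast
  have yA: "y \<in> AA" using y lcsA[OF n] by blast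
  have yc: "y \<in> carrier G" using inC[OF yA] .
  have q: "comm G y g \<in> lcs G (Suc n)" using lcs_mem[OF y g] .
  have qA: "comm G y g \<in> AA" using q lcs_Suc_A by blast
  have wA: "w \<in> AA" using w lcs_Suc_A by blast
  have q2: "comm G (comm G y g) g \<in> lcs G (Suc (Suc n))" using lcs_mem[OF q g] .
  have q2A: "comm G (comm G y g) g \<in> AA" using q2 lcs_Suc_A by blast
  have w3: "comm G w g \<in> lcs G (Suc (Suc n))" using lcs_mem[OF w g] lcs_Suc_sub by blast
  have w3A: "comm G w g \<in> AA" using w3 lcs_Suc_A by blast
  define w' where "w' = (comm G (comm G y g) g) [^] k \<otimes> comm G w g"
  have w'L: "w' \<in> lcs G (Suc (Suc n))" unfolding w'_def
    using subgroup.m_closed[OF lcs_sg sg_pow[OF lcs_sg q2] w3] .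
  have w'A: "w' \<in> AA" using w'L lcs_Suc_A by blast
  have c2: "comm G ((comm G y g) [^] k \<otimes> w) g = w'" unfolding w'_def using cm_elem[OF qA wA g] .
  have "comm G y (g [^] Suc k) = comm G y (g [^] k \<otimes> g)" by simp
  also have "\<dots> = comm G y g \<otimes> (comm G y (g [^] k) \<otimes> comm G (comm G y (g [^] k)) g)"
    using LIN1[OF yc _ g] g by simp
  also have "\<dots> = comm G y g \<otimes> ((comm G y g) [^] k \<otimes> (w \<otimes> w'))"
    unfolding e c2 using inC[OF qA] inC[OF wA] inC[OF w'A] by (simp add: m_assoc)
  also have "\<dots> = (comm G y g) [^] Suc k \<otimes> (w \<otimes> w')"
    using inC[OF qA] inC[OF wA] inC[OF w'A] nat_pow_comm[OF inC[OF qA], of k 1]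
    by (simp add: m_assoc[symmetric])
  finally show ?case using subgroup.m_closed[OF lcs_sg w w'L] by blast
qed

lemma LIN:
  assumes y: "y \<in> lcs G n" and n: "1 \<le> n" and a: "a \<in> carrier G" and b: "b \<in> carrier G"
  shows "\<exists>w \<in> lcs G (Suc (Suc n)). comm G y (a [^] (k::nat) \<otimes> b [^] (l::nat)) = (comm G y a) [^] k \<otimes> (comm G y b) [^] l \<otimes> w"
proof -
  obtain w1 where w1: "w1 \<in> lcs G (Suc (Suc n))" "comm G y (a [^] k) = (comm G y a) [^] k \<otimes> w1"
    using LINpow[OF y n a] by blast
  obtain w2 where w2: "w2 \<in> lcs G (Suc (Suc n))" "comm G y (b [^] l) = (comm G y b) [^] l \<otimes> w2"
    using LINpow[OF y n b] by blast
  have yA: "y \<in> AA" using y lcsA[OF n] by blast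
  have yc: "y \<in> carrier G" using inC[OF yA] .
  have qa: "comm G y (a [^] k) \<in> lcs G (Suc n)" using lcs_mem[OF y] a by simp
  have w3: "comm G (comm G y (a [^] k)) (b [^] l) \<in> lcs G (Suc (Suc n))" using lcs_mem[OF qa] b by simp
  have A1: "comm G y a \<in> AA" "comm G y b \<in> AA" using lcs_mem[OF y] a b lcs_Suc_A by blast+
  have A2: "w1 \<in> AA" "w2 \<in> AA" "comm G (comm G y (a [^] k)) (b [^] l) \<in> AA" using w1 w2 w3 lcs_Suc_A by blast+
  have "comm G y (a [^] k \<otimes> b [^] l) = comm G y (b [^] l) \<otimes> (comm G y (a [^] k) \<otimes> comm G (comm G y (a [^] k)) (b [^] l))"
    using LIN1[OF yc] a b by simp
  also have "\<dots> = ((comm G y b) [^] l \<otimes> w2) \<otimes> (((comm G y a) [^] k \<otimes> w1) \<otimes> comm G (comm G y (a [^] k)) (b [^] l))"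
    using w1 w2 by simp
  also have "\<dots> = (comm G y a) [^] k \<otimes> (comm G y b) [^] l \<otimes> (w1 \<otimes> (w2 \<otimes> comm G (comm G y (a [^] k)) (b [^] l)))"
    using AAp[OF A1(1)] AAp[OF A1(2)] A2 inC AAlc AAc
    by (smt (verit, ccfv_threshold) AAm m_assoc)
  finally show ?thesis
    using subgroup.m_closed[OF lcs_sg w1(1) subgroup.m_closed[OF lcs_sg w2(1) w3]] by blast
qed

end


context P7 begin

lemma comm_pow_self: "g \<in> carrier G \<Longrightarrow> comm G g (g [^] (i::nat)) = \<one>"
  using comm_one_iff[of g "g [^] i"] nat_pow_comm[of g 1 i] by simp

lemma noncomm: "\<exists>z \<in> AA. z \<notin> commutators G"
proof -
  obtain a b k l where ab: "gen2 a b"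
    and X: "(comm G (comm G b a) a) [^] (k::nat) \<otimes> (comm G (comm G b a) b) [^] (l::nat) \<notin> B4"
           "(comm G (comm G b a) a) [^] k \<otimes> (comm G (comm G b a) b) [^] l \<in> Zs"
    using Z5s by blast
  note d = gen2D[OF ab]
  define c where "c = comm G b a"
  have c: "c \<in> AA" unfolding c_def using cm1 d by simp
  define u where "u = comm G c a"
  define v where "v = comm G c b"
  have u3: "u \<in> B3" "v \<in> B3" using cm2[OF c] d unfolding u_def v_def by auto
  have uA: "u \<in> AA" "v \<in> AA" using u3 B3A by auto
  have F: "B3 \<subseteq> pcl G u (pcl G v B4)" using F1[OF ab, folded c_def, folded u_def v_def] .
  have swap: "comm G v a = comm G u b" unfolding u_def v_def using cm_swap[OF c d(2) d(1)] .
  define x where "x = u [^] k \<otimes> v [^] l"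
  have xB4: "x \<notin> B4" and xZ: "x \<in> Zs" using X unfolding x_def u_def v_def c_def by auto
  have xA: "x \<in> AA" unfolding x_def using AAm AAp uA by blast
  have xa: "comm G x a \<in> B5" "comm G x b \<in> B5" using xZ d unfolding Zs_def by auto
  define g0 where "g0 = a [^] k \<otimes> b [^] l"
  have g0c: "g0 \<in> carrier G" unfolding g0_def using d by simp
  have g0A: "g0 \<notin> AA"
  proof
    assume "g0 \<in> AA"
    hence "p dvd k \<and> p dvd l" using gen2_indep[OF ab] g0_def by simp
    hence "u [^] k = \<one>" "v [^] l = \<one>" using pcl_pow_one uA by auto
    hence "x = \<one>" unfolding x_def by simp
    thus False using xB4 subgroup.one_closed[OF lcs_sg] by simp
  qed
  define t where "t = comm G c g0"
  obtain w where w: "w \<in> lcs G (Suc (Suc 1))" "comm G c g0 = (comm G c a) [^] k \<otimes> (comm G c b) [^] l \<otimes> w"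
    using LIN[of c 1 a b k l] c d g0_def by auto
  have w4: "w \<in> B4" using w(1) by (simp add: eval_nat_numeral)
  have tx: "t = x \<otimes> w" unfolding t_def x_def u_def v_def using w(2) by simp
  have t3: "t \<in> B3" unfolding t_def using cm2[OF c g0c] .
  have tA: "t \<in> AA" using t3 B3A by blast
  have tc: "t \<in> carrier G" using inC[OF tA] .
  have wA: "w \<in> AA" using w4 B4A by blast
  have tB4: "t \<notin> B4"
  proof
    assume "t \<in> B4"
    hence "t \<otimes> inv w \<in> B4" using subgroup.m_closed[OF lcs_sg _ subgroup.m_inv_closed[OF lcs_sg w4]] by blast
    moreover have "t \<otimes> inv w = x" unfolding tx using inC[OF xA] inC[OF wA] by (simp add: m_assoc)
    ultimately show False using xB4 by simp
  qed
  have lin2: "\<And>y. y \<in> B3 \<Longrightarrow> \<exists>w5\<in>B5. comm G y g0 = (comm G y a) [^] k \<otimes> (comm G y b) [^] l \<otimes> w5"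
  proof -
    fix y assume y: "y \<in> B3"
    obtain w5 where "w5 \<in> lcs G (Suc (Suc 2))" "comm G y g0 = (comm G y a) [^] k \<otimes> (comm G y b) [^] l \<otimes> w5"
      using LIN[of y 2 a b k l] y d g0_def by auto
    thus "\<exists>w5\<in>B5. comm G y g0 = (comm G y a) [^] k \<otimes> (comm G y b) [^] l \<otimes> w5"
      by (auto simp: eval_nat_numeral)
  qed
  have cxa: "comm G x a = (comm G u a) [^] k \<otimes> (comm G v a) [^] l"
    unfolding x_def using cm_hom[OF AAp[OF uA(1)] AAp[OF uA(2)] d(1)] cm_pow[OF uA(1) d(1)] cm_pow[OF uA(2) d(1)] by simp
  have cxb: "comm G x b = (comm G u b) [^] k \<otimes> (comm G v b) [^] l"
    unfolding x_def using cm_hom[OF AAp[OF uA(1)] AAp[OF uA(2)] d(2)] cm_pow[OF uA(1) d(2)] cm_pow[OF uA(2) d(2)] by simp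
  have cu: "comm G u g0 \<in> B5"
  proof -
    obtain w5 where w5: "w5 \<in> B5" "comm G u g0 = (comm G u a) [^] k \<otimes> (comm G u b) [^] l \<otimes> w5"
      using lin2[OF u3(1)] by blast
    have "comm G u g0 = comm G x a \<otimes> w5" using w5(2) cxa swap by simp
    thus ?thesis using subgroup.m_closed[OF lcs_sg xa(1) w5(1)] by simp
  qed
  have cv: "comm G v g0 \<in> B5"
  proof -
    obtain w5 where w5: "w5 \<in> B5" "comm G v g0 = (comm G v a) [^] k \<otimes> (comm G v b) [^] l \<otimes> w5"
      using lin2[OF u3(2)] by blast
    have "comm G v g0 = comm G x b \<otimes> w5" using w5(2) cxb swap by simp
    thus ?thesis using subgroup.m_closed[OF lcs_sg xa(2) w5(1)] by simp
  qed
  have pvA: "pcl G v B4 \<subseteq> AA" using pcl_in_sg[OF AAsg uA(2) B4A] .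
  have C3: "\<And>y. y \<in> B3 \<Longrightarrow> comm G y g0 \<in> B5"
  proof -
    fix y assume "y \<in> B3"
    hence y: "y \<in> pcl G u (pcl G v B4)" using F by blast
    have inner: "\<And>m. m \<in> pcl G v B4 \<Longrightarrow> comm G m g0 \<in> B5"
      using H1[OF lcs_sg uA(2) B4A g0c cv] cm4 g0c by blast
    show "comm G y g0 \<in> B5" using H1[OF lcs_sg uA(1) pvA g0c cu inner y] .
  qed
  define L where "L = pcl G t B5"
  have Ls: "subgroup L G" unfolding L_def using pcl_sg[OF finG lcs_normal tc] .
  have tL: "t \<in> L" unfolding L_def using pcl_gen1[OF tc subgroup.one_closed[OF lcs_sg]] .
  have B5L: "B5 \<subseteq> L" unfolding L_def using pcl_incl[OF lcs_sub] by blast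
  have L3: "L \<subseteq> B3" unfolding L_def using pcl_in_sg[OF lcs_sg t3 B5B3] .
  have CmL: "\<And>y. y \<in> AA \<Longrightarrow> comm G y g0 \<in> L"
  proof -
    fix y assume "y \<in> AA"
    hence y: "y \<in> pcl G c B3" using A_eq[OF ab] c_def by simp
    show "comm G y g0 \<in> L"
      by (rule H1[OF Ls c B3A g0c _ _ y]) (use tL t_def C3 B5L in blast)+
  qed
  have "B4 \<noteq> B5" using cardB4 cardB5 p1 by (metis less_irrefl power_one_right power_strict_increasing_iff one_less_numeral_iff semiring_norm(76))
  then obtain w0 where w0: "w0 \<in> B4" "w0 \<notin> B5" using ch4 by blast
  have w0A: "w0 \<in> AA" using w0 B4A by blast
  define z where "z = t \<otimes> w0"
  have z3: "z \<in> B3" unfolding z_def using subgroup.m_closed[OF lcs_sg t3] w0 ch3 by blast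
  have zA: "z \<in> AA" using z3 B3A by blast
  have zc: "z \<in> carrier G" using inC[OF zA] .
  have tz: "t = z \<otimes> inv w0" unfolding z_def using tc inC[OF w0A] by (simp add: m_assoc)
  have zB4: "z \<notin> B4"
  proof
    assume "z \<in> B4"
    hence "z \<otimes> inv w0 \<in> B4" using subgroup.m_closed[OF lcs_sg _ subgroup.m_inv_closed[OF lcs_sg w0(1)]] by blast
    thus False using tB4 tz by simp
  qed
  have zL: "z \<notin> L"
  proof
    assume "z \<in> L"
    hence "inv t \<otimes> z \<in> L" using subgroup.m_closed[OF Ls subgroup.m_inv_closed[OF Ls tL]] by blast
    moreover have "inv t \<otimes> z = w0" unfolding z_def using tc inC[OF w0A] by simp
    ultimately have "w0 \<in> pcl G t B5" unfolding L_def by simp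
    then obtain m e where e: "e \<in> B5" "w0 = t [^] (m::nat) \<otimes> e" by (rule pclE)
    have eA: "e \<in> AA" using e(1) B5A by blast
    have tm: "t [^] m = w0 \<otimes> inv e" using e(2) tc inC[OF eA] by (simp add: m_assoc)
    have tm4: "t [^] m \<in> B4" unfolding tm using subgroup.m_closed[OF lcs_sg w0(1) subgroup.m_inv_closed[OF lcs_sg]] e(1) ch4 by blast
    show False
    proof (cases "p dvd m")
      case True
      hence "t [^] m = \<one>" using pcl_pow_one[OF tA] by blast
      hence "w0 = e" using e(2) inC[OF eA] by simp
      thus False using w0 e by simp
    next
      case False
      have "m \<noteq> 0" using False by (metis dvd_0_right)
      hence "t \<in> B4" using sg_coprime_pow[OF lcs_sg tc tm4 _ ndvd_coprime[OF False]] Aexp[OF tA] subgroup.one_closed[OF lcs_sg] by simp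
      thus False using tB4 by simp
    qed
  qed
  have powL: "\<And>i y. y \<in> AA \<Longrightarrow> comm G y (g0 [^] (i::nat)) \<in> L"
  proof -
    fix i y assume y: "y \<in> AA"
    show "comm G y (g0 [^] (i::nat)) \<in> L"
    proof (induct i)
      case 0 thus ?case using subgroup.one_closed[OF Ls] inC[OF y] by simp
    next
      case (Suc i)
      define q where "q = comm G y (g0 [^] i)"
      have qL: "q \<in> L" using Suc q_def by simp
      have q3: "q \<in> B3" using qL L3 by blast
      have qc: "q \<in> carrier G" using q3 B3A inC by blast
      have "comm G y (g0 [^] Suc i) = comm G y (g0 [^] i \<otimes> g0)" by simp
      also have "\<dots> = comm G y g0 \<otimes> inv g0 \<otimes> q \<otimes> g0"
        using comm_mult_right[OF inC[OF y] _ g0c, of "g0 [^] i"] g0c q_def by simp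
      also have "\<dots> = comm G y g0 \<otimes> (inv g0 \<otimes> q \<otimes> g0)"
        using g0c qc inC[OF y] by (simp add: m_assoc)
      also have "inv g0 \<otimes> q \<otimes> g0 = q \<otimes> comm G q g0"
        using qc g0c by (simp add: comm_def m_assoc)
      finally have eq: "comm G y (g0 [^] Suc i) = comm G y g0 \<otimes> (q \<otimes> comm G q g0)" .
      have cq: "comm G q g0 \<in> L" using B5L C3[OF q3] by (rule subsetD)
      have "comm G y g0 \<otimes> (q \<otimes> comm G q g0) \<in> L"
        using subgroup.m_closed[OF Ls CmL[OF y] subgroup.m_closed[OF Ls qL cq]] .
      thus ?case using eq by simp
    qed
  qed
  have "z \<notin> commutators G"
  proof
    assume "z \<in> commutators G"
    then obtain g h where gh: "g \<in> carrier G" "h \<in> carrier G" "z = comm G g h"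
      unfolding commutators_def by blast
    have "\<exists>g'. g' \<in> carrier G \<and> g' \<notin> AA \<and> z \<in> Cm G AA g'"
    proof (cases "g \<in> AA")
      case gA: True
      show ?thesis
      proof (cases "h \<in> AA")
        case True
        hence "z = \<one>" using gh cm_AA gA by simp
        thus ?thesis using zB4 subgroup.one_closed[OF lcs_sg] by simp
      next
        case False
        thus ?thesis using gh CmI[OF gA] by blast
      qed
    next
      case gA: False
      show ?thesis
      proof (cases "h \<in> AA")
        case True
        have "z = comm G (inv h) g" using gh cm_inv[OF True gh(1)] comm_inv[OF gh(2) gh(1)] by simp
        thus ?thesis using gh gA CmI[OF AAi[OF True]] by blast
      next
        case hA: False
        show ?thesis
        proof (cases "h \<in> pcl G g AA")
          case True
          then obtain i y where y: "y \<in> AA" "h = g [^] (i::nat) \<otimes> y" by (rule pclE)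
          have yc: "y \<in> carrier G" using inC[OF y(1)] .
          have "z = comm G g y"
            using gh(3) y(2) comm_mult_right[OF gh(1) _ yc, of "g [^] i"] comm_pow_self[OF gh(1)] gh(1) yc
            by (simp add: m_assoc)
          also have "\<dots> = comm G (inv y) g" using cm_inv[OF y(1) gh(1)] comm_inv[OF yc gh(1)] by simp
          finally show ?thesis using gh gA CmI[OF AAi[OF y(1)]] by blast
        next
          case False
          have gh2: "gen2 g h" unfolding gen2_def using gh gA False by blast
          have "inv z = comm G h g" using gh comm_inv by simp
          hence "comm G h g \<in> B3" using subgroup.m_inv_closed[OF lcs_sg z3] by simp
          hence "pcl G (comm G h g) B3 \<subseteq> B3" using pcl_in_sg[OF lcs_sg _ subset_refl] by blast
          hence "AA \<subseteq> B3" using A_eq[OF gh2] by simp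
          hence "AA = B3" using ch2 by blast
          thus ?thesis using lcs_ne[of 1] by (simp add: numeral_2_eq_2)
        qed
      qed
    qed
    then obtain g' where g': "g' \<in> carrier G" "g' \<notin> AA" "z \<in> Cm G AA g'" by blast
    obtain x' where x': "x' \<in> AA" "z = comm G x' g'" using g'(3) by (rule CmE)
    show False
    proof (cases "g' \<in> pcl G g0 AA")
      case True
      then obtain i y where y: "y \<in> AA" "g' = g0 [^] (i::nat) \<otimes> y" by (rule pclE)
      have yc: "y \<in> carrier G" using inC[OF y(1)] .
      have qA: "comm G x' (g0 [^] i) \<in> AA" using cm1 inC[OF x'(1)] g0c by simp
      have "z = comm G x' y \<otimes> (inv y \<otimes> comm G x' (g0 [^] i) \<otimes> y)"
        using x'(2) y(2) comm_mult_right[OF inC[OF x'(1)] _ yc, of "g0 [^] i"] g0c yc inC[OF x'(1)] by (simp add: m_assoc)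
      also have "\<dots> = comm G x' (g0 [^] i)" using cm_AA[OF x'(1) y(1)] cj_AA[OF qA y(1)] inC[OF qA] by simp
      finally have "z \<in> L" using powL[OF x'(1)] by simp
      thus False using zL by simp
    next
      case False
      have gg: "gen2 g0 g'" unfolding gen2_def using g0c g0A g' False by blast
      define M where "M = pcl G t B4"
      have Ms: "subgroup M G" unfolding M_def using pcl_sg[OF finG lcs_normal tc] .
      have tM: "t \<in> M" unfolding M_def using pcl_gen1[OF tc subgroup.one_closed[OF lcs_sg]] .
      have B4M: "B4 \<subseteq> M" unfolding M_def using pcl_incl[OF lcs_sub] by blast
      have LM: "L \<subseteq> M" unfolding L_def using pcl_in_sg[OF Ms tM] B4M ch4 by blast
      define t' where "t' = comm G c g'"
      have t'A: "t' \<in> AA" unfolding t'_def using cm2[OF c g'(1)] B3A by blast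
      define N' where "N' = pcl G t' B4"
      have N's: "subgroup N' G" unfolding N'_def using pcl_sg[OF finG lcs_normal inC[OF t'A]] .
      have t'N: "t' \<in> N'" unfolding N'_def using pcl_gen1[OF inC[OF t'A] subgroup.one_closed[OF lcs_sg]] .
      have B4N: "B4 \<subseteq> N'" unfolding N'_def using pcl_incl[OF lcs_sub] by blast
      have CmN: "Cm G AA g' \<subseteq> N'"
      proof
        fix q assume "q \<in> Cm G AA g'"
        then obtain y where y: "y \<in> AA" "q = comm G y g'" by (rule CmE)
        have y': "y \<in> pcl G c B3" using A_eq[OF ab] c_def y(1) by simp
        have "comm G y g' \<in> N'"
          by (rule H1[OF N's c B3A g'(1) _ _ y']) (use t'N t'_def B4N cm3 g' in blast)+
        thus "q \<in> N'" using y by simp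
      qed
      have "z \<in> N'" using CmN g'(3) by blast
      then obtain m e where e: "e \<in> B4" "z = t' [^] (m::nat) \<otimes> e" unfolding N'_def by (rule pclE)
      have eA: "e \<in> AA" using e(1) B4A by blast
      have pm: "\<not> p dvd m"
      proof
        assume "p dvd m"
        hence "t' [^] m = \<one>" using pcl_pow_one[OF t'A] by blast
        hence "z = e" using e(2) inC[OF eA] by simp
        thus False using zB4 e by simp
      qed
      have zM: "z \<in> M" unfolding M_def z_def using pclI[OF w0(1), of t 1] tc by simp
      have "t' [^] m = z \<otimes> inv e" using e(2) inC[OF t'A] inC[OF eA] by (simp add: m_assoc)
      hence t'mM: "t' [^] m \<in> M" using subgroup.m_closed[OF Ms zM subgroup.m_inv_closed[OF Ms]] e(1) B4M by auto
      have "m \<noteq> 0" using pm by (metis dvd_0_right)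
      hence t'M: "t' \<in> M"
        using sg_coprime_pow[OF Ms inC[OF t'A] t'mM _ ndvd_coprime[OF pm]] Aexp[OF t'A] subgroup.one_closed[OF Ms] by simp
      have "N' \<subseteq> M" unfolding N'_def using pcl_in_sg[OF Ms t'M B4M] .
      hence "Cm G AA g' \<subseteq> M" using CmN by blast
      moreover have "Cm G AA g0 \<subseteq> M" using CmL LM by (auto simp: Cm_def)
      ultimately have "B3 \<subseteq> M" using lcs_gen2[OF gg] sprod_in_sg[OF Ms] by simp
      hence "card B3 \<le> card M" using card_mono[OF fin_sub[OF subgroup.subset[OF Ms]]] by blast
      hence "p^4 \<le> p^3" using cardB3 card_L[OF tA] M_def by simp
      thus False using p1 by simp
    qed
  qed
  thus ?thesis using zA by blast
qed

end


context P7 begin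

lemma commI: "g \<in> carrier G \<Longrightarrow> h \<in> carrier G \<Longrightarrow> comm G g h \<in> commutators G"
  unfolding commutators_def by blast

lemma comm_carrier: "k \<in> commutators G \<Longrightarrow> k \<in> carrier G"
  unfolding commutators_def by auto

lemma KC:
  assumes ab: "gen2 a b" and y: "y \<in> B3"
  shows "comm G b a \<otimes> y \<in> commutators G"
proof -
  note d = gen2D[OF ab]
  have "y \<in> sprod G (Cm G AA a) (Cm G AA b)" using lcs_gen2[OF ab] y by simp
  then obtain y1 y2 where y12: "y1 \<in> Cm G AA a" "y2 \<in> Cm G AA b" "y = y1 \<otimes> y2" by (rule sprodE)
  obtain x where x: "x \<in> AA" "y1 = comm G x a" using y12(1) by (rule CmE)
  obtain x2 where x2: "x2 \<in> AA" "y2 = comm G x2 b" using y12(2) by (rule CmE)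
  define yy where "yy = inv x2"
  have yyA: "yy \<in> AA" unfolding yy_def using AAi[OF x2(1)] .
  have xc: "x \<in> carrier G" and yyc: "yy \<in> carrier G" using inC x(1) yyA by auto
  have ay: "a \<otimes> yy \<in> carrier G" using d yyc by simp
  have QA: "comm G b (a \<otimes> yy) \<in> AA" using cm1 d ay by simp
  have RA: "comm G x a \<in> AA" using cm2[OF x(1) d(1)] B3A by blast
  have CA: "comm G b a \<in> AA" using cm1 d by simp
  have SA: "comm G x2 b \<in> AA" using cm2[OF x2(1) d(2)] B3A by blast
  have e1: "comm G (b \<otimes> x) (a \<otimes> yy) = comm G b (a \<otimes> yy) \<otimes> comm G x (a \<otimes> yy)"
    using comm_mult_left[OF d(2) xc ay] cj_AA[OF QA x(1)] by simp
  have "comm G x (a \<otimes> yy) = comm G x yy \<otimes> inv yy \<otimes> comm G x a \<otimes> yy"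
    using comm_mult_right[OF xc d(1) yyc] .
  also have "\<dots> = inv yy \<otimes> comm G x a \<otimes> yy" using cm_AA[OF x(1) yyA] yyc inC[OF RA] by simp
  also have "\<dots> = comm G x a" using cj_AA[OF RA yyA] .
  finally have e2: "comm G x (a \<otimes> yy) = comm G x a" .
  have "comm G b (a \<otimes> yy) = comm G b yy \<otimes> inv yy \<otimes> comm G b a \<otimes> yy"
    using comm_mult_right[OF d(2) d(1) yyc] .
  also have "\<dots> = comm G b yy \<otimes> (inv yy \<otimes> comm G b a \<otimes> yy)"
    using d yyc by (simp add: m_assoc)
  also have "\<dots> = comm G b yy \<otimes> comm G b a" using cj_AA[OF CA yyA] by simp
  also have "comm G b yy = comm G x2 b"
  proof -
    have "comm G b yy = inv (comm G yy b)" using comm_inv[OF yyc d(2)] by simp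
    also have "\<dots> = comm G (inv yy) b" using cm_inv[OF yyA d(2)] by simp
    also have "inv yy = x2" unfolding yy_def using inC[OF x2(1)] by simp
    finally show ?thesis .
  qed
  finally have e3: "comm G b (a \<otimes> yy) = comm G x2 b \<otimes> comm G b a" .
  have "comm G (b \<otimes> x) (a \<otimes> yy) = comm G x2 b \<otimes> comm G b a \<otimes> comm G x a"
    using e1 e2 e3 by simp
  also have "\<dots> = comm G b a \<otimes> (comm G x a \<otimes> comm G x2 b)"
    using AAc[OF SA CA] AAc[OF SA RA] inC[OF SA] inC[OF CA] inC[OF RA] AAlc[OF SA RA]
    by (metis m_assoc AAc AAm)
  also have "\<dots> = comm G b a \<otimes> y" using y12(3) x(2) x2(2) by simp
  finally show ?thesis using commI[of "b \<otimes> x" "a \<otimes> yy"] d xc ay by simp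
qed

lemma comm_pow_left:
  assumes g: "g \<in> carrier G" and a: "a \<in> carrier G"
  shows "\<exists>e \<in> B3. comm G (g [^] (r::nat)) a = (comm G g a) [^] r \<otimes> e"
proof (induct r)
  case 0 thus ?case using subgroup.one_closed[OF lcs_sg] a by force
next
  case (Suc r)
  then obtain e where e: "e \<in> B3" "comm G (g [^] r) a = (comm G g a) [^] r \<otimes> e" by blast
  define q where "q = comm G (g [^] r) a"
  have qA: "q \<in> AA" unfolding q_def using cm1 g a by simp
  have cA: "comm G g a \<in> AA" using cm1 g a by simp
  have eA: "e \<in> AA" using e B3A by blast
  have qg: "comm G q g \<in> B3" using cm2[OF qA g] .
  have qgA: "comm G q g \<in> AA" using qg B3A by blast
  have "comm G (g [^] Suc r) a = comm G (g [^] r \<otimes> g) a" by simp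
  also have "\<dots> = inv g \<otimes> q \<otimes> g \<otimes> comm G g a" using comm_mult_left[OF _ g a, of "g [^] r"] g q_def by simp
  also have "inv g \<otimes> q \<otimes> g = q \<otimes> comm G q g" using inC[OF qA] g by (simp add: comm_def m_assoc)
  also have "q = (comm G g a) [^] r \<otimes> e" using e q_def by simp
  also have "(comm G g a) [^] r \<otimes> e \<otimes> comm G ((comm G g a) [^] r \<otimes> e) g \<otimes> comm G g a
      = (comm G g a) [^] Suc r \<otimes> (e \<otimes> comm G ((comm G g a) [^] r \<otimes> e) g)"
    using qgA[unfolded q_def e(2)] eA cA inC AAp[OF cA] nat_pow_comm[OF inC[OF cA], of r 1]
    by (smt (verit) AAc AAlc AAm m_assoc nat_pow_Suc nat_pow_closed)
  finally show ?case using subgroup.m_closed[OF lcs_sg e(1) qg[unfolded q_def e(2)]] by blast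
qed

lemma KK: "z \<in> AA \<Longrightarrow> \<exists>k1 k2. k1 \<in> commutators G \<and> k2 \<in> commutators G \<and> z = k1 \<otimes> k2"
proof -
  assume zA: "z \<in> AA"
  obtain a b where ab: "gen2 a b" using gen2_ex by blast
  note d = gen2D[OF ab]
  define c where "c = comm G b a"
  have c: "c \<in> AA" unfolding c_def using cm1 d by simp
  have cc: "c \<in> carrier G" using inC[OF c] .
  have "z \<in> pcl G c B3" using A_eq[OF ab] zA c_def by simp
  then obtain r0 e where e: "e \<in> B3" "z = c [^] (r0::nat) \<otimes> e" by (rule pclE)
  define r where "r = r0 mod p"
  have zr: "z = c [^] r \<otimes> e" unfolding r_def using e(2) pow_mod_eq[OF cc Aexp[OF c]] by simp
  have eA: "e \<in> AA" using e(1) B3A by blast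
  show ?thesis
  proof (cases "r = 0")
    case True
    have ze: "z = e" using zr True inC[OF eA] by simp
    have k1: "c \<in> commutators G" unfolding c_def using commI d by simp
    have "comm G a b \<otimes> e \<in> commutators G" using KC[OF gen2_sym[OF ab] e(1)] .
    moreover have "comm G a b = inv c" unfolding c_def using comm_inv d by simp
    ultimately have k2: "inv c \<otimes> z \<in> commutators G" using ze by simp
    have "z = c \<otimes> (inv c \<otimes> z)" using cc inC[OF zA] by simp
    thus ?thesis using k1 k2 by blast
  next
    case False
    have "r < p" unfolding r_def using p0 by simp
    hence nd: "\<not> p dvd r" using False by (meson dvd_imp_le linorder_not_le neq0_conv)
    have g2: "gen2 (b [^] r) a" using gen2_powb[OF ab nd] .
    obtain e' where e': "e' \<in> B3" "comm G (b [^] r) a = c [^] r \<otimes> e'"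
      using comm_pow_left[OF d(2) d(1), of r] c_def by blast
    have e'A: "e' \<in> AA" using e'(1) B3A by blast
    have ie: "inv e' \<otimes> e \<in> B3" using subgroup.m_closed[OF lcs_sg subgroup.m_inv_closed[OF lcs_sg e'(1)] e(1)] .
    have "comm G (b [^] r) a \<otimes> (inv e' \<otimes> e) = c [^] r \<otimes> e"
      using e'(2) cc inC[OF e'A] inC[OF eA] by (simp add: m_assoc)
    hence "z \<in> commutators G" using KC[OF gen2_sym[OF g2] ie] zr by simp
    moreover have "\<one> \<in> commutators G" using commI[of "\<one>" "\<one>"] by simp
    moreover have "z = z \<otimes> \<one>" using inC[OF zA] by simp
    ultimately show ?thesis by blast
  qed
qed

lemma comm_products_1: "comm_products G 1 \<subseteq> commutators G"
proof
  fix y assume "y \<in> comm_products G 1"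
  then obtain xs where xs: "y = foldr (\<otimes>) xs \<one>" "length xs \<le> 1" "set xs \<subseteq> commutators G"
    unfolding comm_products_def by blast
  show "y \<in> commutators G"
  proof (cases xs)
    case Nil thus ?thesis using xs commI[of "\<one>" "\<one>"] by simp
  next
    case (Cons k ys)
    hence "ys = []" using xs(2) by simp
    hence "y = k \<otimes> \<one>" "k \<in> commutators G" using xs Cons by auto
    thus ?thesis using comm_carrier by simp
  qed
qed

lemma AA_comm_products_2: "AA \<subseteq> comm_products G 2"
proof
  fix z assume "z \<in> AA"
  then obtain k1 k2 where k: "k1 \<in> commutators G" "k2 \<in> commutators G" "z = k1 \<otimes> k2" using KK by blast
  have "z = foldr (\<otimes>) [k1, k2] \<one>" using k comm_carrier by simp
  moreover have "length [k1, k2] \<le> 2" "set [k1, k2] \<subseteq> commutators G" using k by auto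
  ultimately show "z \<in> comm_products G 2" unfolding comm_products_def by blast
qed

lemma comm_length: "(LEAST m. 0 < m \<and> AA \<subseteq> comm_products G m) = 2"
proof (rule Least_equality)
  show "0 < (2::nat) \<and> AA \<subseteq> comm_products G 2" using AA_comm_products_2 by simp
next
  fix m :: nat assume m: "0 < m \<and> AA \<subseteq> comm_products G m"
  show "2 \<le> m"
  proof (rule ccontr)
    assume "\<not> 2 \<le> m"
    hence "m = 1" using m by simp
    hence "AA \<subseteq> commutators G" using m comm_products_1 by blast
    thus False using noncomm by blast
  qed
qed

lemma comm_ne: "commutators G \<noteq> AA"
  using noncomm by blast

end


theorem proposition3p3:
  fixes G :: "('a, 'b) monoid_scheme" and p :: nat
  assumes "group G"
    and "Factorial_Ring.prime p" and "p \<ge> 5"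
    and "card (carrier G) = p ^ 7"
    and "nilpotency_class G 5"
    and "elementary_abelian G (gamma G 2) p"
    and "card (gamma G 2) = p ^ 5"
  shows "card (gamma G 5) = p
         \<and> card (center (G Mod (gamma G 5))) = p ^ 2 \<and> card (center2 G) = p ^ 3
         \<and> commutators G \<noteq> gamma G 2
         \<and> commutator_length G = 2"
proof -
  have g2: "gamma G 2 = lcs G 1" by (simp add: gamma_def)
  have g5: "gamma G 5 = lcs G 4" by (simp add: gamma_def)
  have g6: "gamma G 6 = lcs G 5" by (simp add: gamma_def)
  have nc: "lcs G 5 = {\<one>\<^bsub>G\<^esub>}" "lcs G 4 \<noteq> {\<one>\<^bsub>G\<^esub>}"
    using assms(5) g5 g6 unfolding nilpotency_class_def by simp_all
  have ea: "\<And>x y. x \<in> lcs G 1 \<Longrightarrow> y \<in> lcs G 1 \<Longrightarrow> x \<otimes>\<^bsub>G\<^esub> y = y \<otimes>\<^bsub>G\<^esub> x"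
    "\<And>x. x \<in> lcs G 1 \<Longrightarrow> x [^]\<^bsub>G\<^esub> p = \<one>\<^bsub>G\<^esub>"
    using assms(6) g2 unfolding elementary_abelian_def by auto
  interpret P: P7 G p
  proof (intro P7.intro[OF assms(1)] P7_axioms.intro)
    show "Factorial_Ring.prime p" by (rule assms(2))
    show "5 \<le> p" using assms(3) by simp
    show "card (carrier G) = p ^ 7" by (rule assms(4))
    show "lcs G 5 = {\<one>\<^bsub>G\<^esub>}" by (rule nc(1))
    show "lcs G 4 \<noteq> {\<one>\<^bsub>G\<^esub>}" by (rule nc(2))
    show "\<And>x y. x \<in> lcs G 1 \<Longrightarrow> y \<in> lcs G 1 \<Longrightarrow> x \<otimes>\<^bsub>G\<^esub> y = y \<otimes>\<^bsub>G\<^esub> x" by (rule ea(1))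
    show "\<And>x. x \<in> lcs G 1 \<Longrightarrow> x [^]\<^bsub>G\<^esub> p = \<one>\<^bsub>G\<^esub>" by (rule ea(2))
    show "card (lcs G 1) = p ^ 5" using assms(7) g2 by simp
  qed
  have "commutator_length G = 2"
    unfolding commutator_length_def g2 using P.comm_length .
  thus ?thesis
    using P.cardB5 P.card_center_quot P.center2_eq P.cardZs P.comm_ne g2 g5 by simp
qed

end
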